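(* Let $\alpha<\tfrac12$, fix $y>0$, let $f\in\mathcal E$ and $p\in\mathbb N_0$. For every $\varepsilon>0$ there exist $\delta>0$ and $M_0>0$ such that $$\int_{E_M}|f(\xi)|\,\Bigl|\frac{\partial^p}{\partial x^p}q(x,y,\xi)\Bigr|\,\mathrm m(\xi)\,d\xi<\varepsilon\qquad\text{for all }x\in(0,\delta]\text{ and all }M\ge M_0,$$ where $E_M:=(0,\tfrac1M]\cup[M,\infty)$.
   Context: Fix $\alpha<\tfrac12$. $\mathrm m(x):=x^{1-4\alpha}e^{-1/(2x^2)}$. For $x,y,\xi>0$, $q(x,y,\xi):=(2\pi)^{-1/2}(xy\xi)^{-1+2\alpha}\exp\Bigl(\tfrac1{2x^2}+\tfrac1{2y^2}+\tfrac1{2\xi^2}-\bigl(\tfrac{x^2+y^2+\xi^2}{4xy\xi}\bigr)^2\Bigr)D_{2\alpha}\Bigl(\tfrac{x^2+y^2+\xi^2}{2xy\xi}\Bigr)$, with $D_\mu$ the parabolic cylinder function. $\mathcal E$ is the class of Lebesgue measurable $f:(0,\infty)\to\mathbb R$ such that $|f(x)|\le b_1\exp\bigl(\tfrac1{2x^2}+b_2(x^{-\beta}+x^\beta)\bigr)$ for all $x>0$, for some constants $b_1,b_2\ge0$ and $0\le\beta<2$. *)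

theory Defs
  imports "HOL-Analysis.Analysis"
begin

definition kummerM :: "real \<Rightarrow> real \<Rightarrow> real \<Rightarrow> real" where
  "kummerM a b z = (\<Sum>n. pochhammer a n / pochhammer b n * z ^ n / fact n)"

text \<open>Parabolic cylinder function D_nu(z) (Whittaker's function), via the standard
  representation valid for all real nu and z (Gradshteyn--Ryzhik 9.240):
  D_nu(z) = 2^(nu/2) e^(-z^2/4) [ sqrt pi / Gamma((1-nu)/2) M(-nu/2,1/2,z^2/2)
            - sqrt(2 pi) z / Gamma(-nu/2) M((1-nu)/2,3/2,z^2/2) ],
  with 1/Gamma the entire reciprocal Gamma function rGamma.\<close>
definition pcD :: "real \<Rightarrow> real \<Rightarrow> real" where
  "pcD \<nu> z = 2 powr (\<nu> / 2) * exp (- (z^2) / 4) *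
     (sqrt pi * rGamma ((1 - \<nu>) / 2) * kummerM (- \<nu> / 2) (1/2) (z^2 / 2)
      - sqrt (2 * pi) * z * rGamma (- \<nu> / 2) * kummerM ((1 - \<nu>) / 2) (3/2) (z^2 / 2))"

definition mm :: "real \<Rightarrow> real \<Rightarrow> real" where
  "mm \<alpha> x = x powr (1 - 4 * \<alpha>) * exp (- 1 / (2 * x^2))"

definition qq :: "real \<Rightarrow> real \<Rightarrow> real \<Rightarrow> real \<Rightarrow> real" where
  "qq \<alpha> x y \<xi> = (1 / sqrt (2 * pi)) * (x * y * \<xi>) powr (-1 + 2 * \<alpha>) *
     exp (1 / (2 * x^2) + 1 / (2 * y^2) + 1 / (2 * \<xi>^2)
          - ((x^2 + y^2 + \<xi>^2) / (4 * x * y * \<xi>))^2) *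
     pcD (2 * \<alpha>) ((x^2 + y^2 + \<xi>^2) / (2 * x * y * \<xi>))"

definition classE :: "(real \<Rightarrow> real) set" where
  "classE = {f. (\<lambda>x. indicator {0<..} x * f x) \<in> borel_measurable lebesgue \<and>
     (\<exists>b1 b2 \<beta>. b1 \<ge> 0 \<and> b2 \<ge> 0 \<and> 0 \<le> \<beta> \<and> \<beta> < 2 \<and>
        (\<forall>x>0. \<bar>f x\<bar> \<le> b1 * exp (1 / (2 * x^2) + b2 * (x powr (-\<beta>) + x powr \<beta>))))}"

definition EM :: "real \<Rightarrow> real set" where
  "EM M = {0<..1/M} \<union> {M..}"

end

theory Submission
  imports Defs
begin

lemma gamma_int_open:
  assumes "s > (0::real)"
  shows "((\<lambda>t. t powr (s-1) / exp t) has_integral Gamma s) {0<..}"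
proof -
  have "((\<lambda>t. t powr (s-1) / exp t) has_integral Gamma s) {0..}"
    by (rule Gamma_integral_real) fact
  hence "((\<lambda>t. if t \<in> {0<..} then t powr (s-1) / exp t else 0) has_integral Gamma s) {0..}"
    by (rule has_integral_spike [of "{0}", rotated 2]) auto
  also have "?this = ?thesis"
    by (subst has_integral_restrict) auto
  finally show ?thesis .
qed

lemma intb:
  fixes s a :: real
  assumes "s > -1"
  shows "(\<lambda>t. t powr s * exp (a*t - t^2/2)) integrable_on {0<..}"
proof (rule measurable_bounded_by_integrable_imp_integrable)
  show "(\<lambda>t. t powr s * exp (a*t - t^2/2)) \<in> borel_measurable (lebesgue_on {0<..})"
    by (intro continuous_imp_measurable_on_sets_lebesgue continuous_intros) auto
  have "((\<lambda>t. exp ((a+1)^2/2) * (t powr ((s+1)-1) / exp t)) has_integral exp ((a+1)^2/2) * Gamma (s+1)) {0<..}"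
    using gamma_int_open[of "s+1"] assms by (intro has_integral_mult_right) auto
  then show "(\<lambda>t. exp ((a+1)^2/2) * (t powr ((s+1)-1) / exp t)) integrable_on {0<..}"
    by (rule has_integral_integrable)
  show "({0<..} :: real set) \<in> sets lebesgue" by simp
  fix t :: real assume t: "t \<in> {0<..}"
  have e: "a*t - t^2/2 \<le> (a+1)^2/2 - t"
    using sum_squares_ge_zero[of "t - (a+1)" 0] by (simp add: power2_eq_square algebra_simps)
  have "exp (a*t - t^2/2) \<le> exp ((a+1)^2/2) / exp t"
    using e by (simp add: exp_diff[symmetric])
  then show "norm (t powr s * exp (a*t - t^2/2)) \<le> exp ((a+1)^2/2) * (t powr ((s+1)-1) / exp t)"
    using t by (auto intro!: mult_left_mono simp: field_simps)
qed

lemma mom: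
  fixes s :: real
  assumes "s > -1"
  shows "((\<lambda>t. t powr s * exp (-(t^2)/2)) has_integral (2 powr ((s-1)/2) * Gamma ((s+1)/2))) {0<..}"
proof -
  define f where "f u = 2 powr ((s-1)/2) * (u powr ((s+1)/2 - 1) / exp u)" for u :: real
  have hf: "(f has_integral (2 powr ((s-1)/2) * Gamma ((s+1)/2))) {0<..}"
    unfolding f_def using gamma_int_open[of "(s+1)/2"] assms by (intro has_integral_mult_right) auto
  have img: "(\<lambda>t::real. t^2/2) ` {0<..} = {0<..}"
  proof
    show "{0<..} \<subseteq> (\<lambda>t::real. t^2/2) ` {0<..}"
    proof
      fix u :: real assume "u \<in> {0<..}"
      then show "u \<in> (\<lambda>t. t^2/2) ` {0<..}"
        by (intro image_eqI[of _ _ "sqrt (2*u)"]) auto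
    qed
  qed auto
  have inj: "inj_on (\<lambda>t::real. t^2/2) {0<..}"
    by (auto simp: inj_on_def power2_eq_iff)
  have fa: "f absolutely_integrable_on {0<..}"
    using hf unfolding f_def
    by (intro nonnegative_absolutely_integrable_1) auto
  have "(\<lambda>t. \<bar>t\<bar> * f (t^2/2)) absolutely_integrable_on {0<..} \<and>
        integral {0<..} (\<lambda>t. \<bar>t\<bar> * f (t^2/2)) = (2 powr ((s-1)/2) * Gamma ((s+1)/2))"
    apply (subst has_absolute_integral_change_of_variables_1'[where g' = "\<lambda>t. t" and g = "\<lambda>t. t^2/2" and f = f and S = "{0<..}"])
       apply simp
      apply (auto intro!: derivative_eq_intros)[1]
     apply (rule inj)
    using fa hf by (simp add: img integral_unique)
  moreover have "\<bar>t\<bar> * f (t^2/2) = t powr s * exp (-(t^2)/2)" if "t \<in> {0<..}" for t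
  proof -
    have t: "t > 0" using that by simp
    have e1: "(t^2/2) powr ((s+1)/2 - 1) = (t^2) powr ((s-1)/2) / 2 powr ((s-1)/2)"
      using t by (subst powr_divide) (auto simp: field_simps)
    have e2: "(t^2) powr ((s-1)/2) = t powr (s-1)"
    proof -
      have "(t^2) = t powr 2" using t by (simp add: powr_realpow)
      then have "(t^2) powr ((s-1)/2) = t powr (2 * ((s-1)/2))" by (simp only: powr_powr)
      moreover have "2 * ((s-1)/2) = s - 1" by simp
      ultimately show ?thesis by (simp only:)
    qed
    have "(t^2/2) powr ((s+1)/2 - 1) = t powr (s-1) / 2 powr ((s-1)/2)"
      using e1 e2 by simp
    moreover have "t * t powr (s-1) = t powr s"
      using t by (simp add: powr_diff)
    ultimately show ?thesis using t unfolding f_def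
      by (simp add: exp_minus field_simps)
  qed
  ultimately show ?thesis
  proof -
    assume A: "(\<lambda>t. \<bar>t\<bar> * f (t^2/2)) absolutely_integrable_on {0<..} \<and>
        integral {0<..} (\<lambda>t. \<bar>t\<bar> * f (t^2/2)) = (2 powr ((s-1)/2) * Gamma ((s+1)/2))"
    assume B: "\<And>t. t \<in> {0<..} \<Longrightarrow> \<bar>t\<bar> * f (t^2/2) = t powr s * exp (-(t^2)/2)"
    have "((\<lambda>t. \<bar>t\<bar> * f (t^2/2)) has_integral (2 powr ((s-1)/2) * Gamma ((s+1)/2))) {0<..}"
      using A set_lebesgue_integral_eq_integral(1) has_integral_integrable_integral
      by (metis absolutely_integrable_on_def)
    then show ?thesis
      by (rule has_integral_eq[rotated]) (rule B)
  qed
qed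


definition Kf :: "real \<Rightarrow> nat \<Rightarrow> real \<Rightarrow> real" where
  "Kf \<nu> k z = integral {0<..} (\<lambda>t. t powr (real k - \<nu>) * exp (-(z*t) - t^2/2))"

lemma Kint:
  assumes "\<nu> < 1"
  shows "(\<lambda>t. t powr (real k - \<nu>) * exp (-(z*t) - t^2/2)) integrable_on {0<..}"
proof -
  have "(\<lambda>t. t powr (real k - \<nu>) * exp ((-z)*t - t^2/2)) integrable_on {0<..}"
    by (rule intb) (use assms in auto)
  then show ?thesis by (rule integrable_eq) simp
qed

lemma intcm: "f integrable_on S \<Longrightarrow> (\<lambda>x. (c::real) * f x) integrable_on S"
  using integrable_cmul[of f S c] by simp

lemma K_nonneg: "\<nu> < 1 \<Longrightarrow> Kf \<nu> k z \<ge> 0"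
  unfolding Kf_def by (rule integral_nonneg[OF Kint]) auto

lemma K_le0:
  assumes "\<nu> < 1" "z \<ge> 0"
  shows "Kf \<nu> k z \<le> Kf \<nu> k 0"
  unfolding Kf_def
proof (rule integral_le[OF Kint Kint])
  fix t :: real assume t: "t \<in> {0<..}"
  then have "exp (-(z*t) - t^2/2) \<le> exp (-(0*t) - t^2/2)"
    using assms by auto
  then show "t powr (real k - \<nu>) * exp (-(z*t) - t^2/2) \<le> t powr (real k - \<nu>) * exp (-(0*t) - t^2/2)"
    by (intro mult_left_mono) auto
qed (use assms in auto)

lemma exp_taylor2: "\<bar>exp (u::real) - 1 - u\<bar> \<le> exp \<bar>u\<bar> * u^2 / 2"
proof -
  obtain \<tau> where t: "\<bar>\<tau>\<bar> \<le> \<bar>u\<bar>" "exp u = (\<Sum>m<2. u^m / fact m) + exp \<tau> / fact 2 * u^2"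
    using Maclaurin_exp_le[of u 2] by blast
  have "(\<Sum>m<2. u^m / fact m) = 1 + u" by (simp add: numeral_2_eq_2)
  then have E: "exp u - 1 - u = exp \<tau> / 2 * u^2" using t by simp
  have "\<bar>exp u - 1 - u\<bar> = exp \<tau> / 2 * u^2" unfolding E by (rule abs_of_nonneg) simp
  moreover have "exp \<tau> \<le> exp \<bar>u\<bar>" using t by auto
  ultimately show ?thesis
    by (simp add: divide_right_mono mult_right_mono)
qed

lemma K_deriv:
  assumes nu: "\<nu> < 1"
  shows "(Kf \<nu> k has_real_derivative (- Kf \<nu> (Suc k) z)) (at z)"
proof -
  define g where "g t = t powr (real k - \<nu>) * exp (-(z*t) - t^2/2)" for t
  define C where "C = integral {0<..} (\<lambda>t. t powr (real (k+2) - \<nu>) * exp ((1-z)*t - t^2/2)) / 2"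
  have Cint: "(\<lambda>t. t powr (real (k+2) - \<nu>) * exp ((1-z)*t - t^2/2)) integrable_on {0<..}"
    by (rule intb) (use nu in auto)
  have key: "\<bar>(Kf \<nu> k (z+h) - Kf \<nu> k z) / h - (- Kf \<nu> (Suc k) z)\<bar> \<le> C * \<bar>h\<bar>"
    if h: "h \<noteq> 0" "\<bar>h\<bar> \<le> 1" for h
  proof -
    define F where "F t = g t * (exp (-(h*t)) - 1 + h*t)" for t
    have e1: "t powr (real k - \<nu>) * exp (-((z+h)*t) - t^2/2) = g t * exp (-(h*t))" for t
      by (simp add: g_def algebra_simps flip: exp_add)
    have e2: "t powr (real (Suc k) - \<nu>) * exp (-(z*t) - t^2/2) = t * g t" if "t > 0" for t
      using that by (simp add: g_def add_diff_eq[symmetric] powr_add)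
    have i1: "(\<lambda>t. g t * exp (-(h*t))) integrable_on {0<..}"
      using Kint[OF nu, of k "z+h"] by (simp add: e1)
    have i0: "g integrable_on {0<..}" using Kint[OF nu, of k z] by (simp add: g_def[abs_def])
    have i2: "(\<lambda>t. t * g t) integrable_on {0<..}"
      using Kint[OF nu, of "Suc k" z] by (rule integrable_eq) (use e2 in auto)
    have "Kf \<nu> k (z+h) - Kf \<nu> k z + h * Kf \<nu> (Suc k) z = integral {0<..} F"
    proof -
      have a: "Kf \<nu> k (z+h) = integral {0<..} (\<lambda>t. g t * exp (-(h*t)))"
        unfolding Kf_def by (simp add: e1)
      have b: "Kf \<nu> k z = integral {0<..} g" unfolding Kf_def g_def ..
      have c: "Kf \<nu> (Suc k) z = integral {0<..} (\<lambda>t. t * g t)"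
        unfolding Kf_def by (rule integral_cong) (use e2 in auto)
      have "integral {0<..} F = integral {0<..} (\<lambda>t. g t * exp (-(h*t))) - integral {0<..} g + h * integral {0<..} (\<lambda>t. t * g t)"
      proof -
        have "integral {0<..} F = integral {0<..} (\<lambda>t. (g t * exp (-(h*t)) - g t) + h * (t * g t))"
          unfolding F_def by (rule integral_cong) (simp add: algebra_simps)
        also have "\<dots> = integral {0<..} (\<lambda>t. g t * exp (-(h*t)) - g t) + integral {0<..} (\<lambda>t. h * (t * g t))"
          by (rule integral_add) (auto intro!: integrable_diff i1 i0 intcm i2)
        also have "\<dots> = integral {0<..} (\<lambda>t. g t * exp (-(h*t))) - integral {0<..} g + h * integral {0<..} (\<lambda>t. t * g t)"
          by (simp add: integral_diff[OF i1 i0])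
        finally show ?thesis .
      qed
      then show ?thesis using a b c by simp
    qed
    moreover have "\<bar>integral {0<..} F\<bar> \<le> h^2 * C"
    proof -
      have "norm (integral {0<..} F) \<le> integral {0<..} (\<lambda>t. h^2/2 * (t powr (real (k+2) - \<nu>) * exp ((1-z)*t - t^2/2)))"
      proof (rule integral_norm_bound_integral)
        show "F integrable_on {0<..}"
          unfolding F_def
          using integrable_add[OF integrable_diff[OF i1 i0] intcm[OF i2, of h]]
          by (simp add: algebra_simps)
        show "(\<lambda>t. h^2/2 * (t powr (real (k+2) - \<nu>) * exp ((1-z)*t - t^2/2))) integrable_on {0<..}"
          by (rule intcm[OF Cint])
        fix t :: real assume "t \<in> {0<..}"
        then have t: "t > 0" by simp
        have "\<bar>exp (-(h*t)) - 1 + h*t\<bar> \<le> exp \<bar>-(h*t)\<bar> * (-(h*t))^2/2"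
          using exp_taylor2[of "-(h*t)"] by simp
        also have "\<dots> \<le> exp t * (h^2 * t^2) / 2"
        proof -
          have "\<bar>-(h*t)\<bar> \<le> t" using h t by (simp add: abs_mult mult_left_le_one_le)
          then show ?thesis by (intro divide_right_mono mult_mono) (auto simp: power_mult_distrib)
        qed
        finally have ex: "\<bar>exp (-(h*t)) - 1 + h*t\<bar> \<le> exp t * (h^2 * t^2) / 2" .
        have gt: "\<bar>g t\<bar> = g t" using t by (simp add: g_def)
        have "norm (F t) = g t * \<bar>exp (-(h*t)) - 1 + h*t\<bar>"
          by (simp add: F_def abs_mult gt)
        also have "\<dots> \<le> g t * (exp t * (h^2 * t^2) / 2)"
          by (rule mult_left_mono[OF ex]) (use t in \<open>simp add: g_def\<close>)
        also have "\<dots> = h^2/2 * (t powr (real (k+2) - \<nu>) * exp ((1-z)*t - t^2/2))"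
        proof -
          have "t powr (real (k+2) - \<nu>) = t powr (real k - \<nu>) * t^2"
          proof -
            have "real (k+2) - \<nu> = (real k - \<nu>) + 2" by simp
            then have "t powr (real (k+2) - \<nu>) = t powr (real k - \<nu>) * t powr 2"
              by (simp only: powr_add)
            then show ?thesis using t by (simp add: powr_numeral)
          qed
          moreover have "exp ((1-z)*t - t^2/2) = exp (-(z*t) - t^2/2) * exp t"
            by (simp add: algebra_simps flip: exp_add)
          ultimately show ?thesis by (simp add: g_def algebra_simps)
        qed
        finally show "norm (F t) \<le> h^2/2 * (t powr (real (k+2) - \<nu>) * exp ((1-z)*t - t^2/2))" .
      qed
      also have "\<dots> = h^2 * C"
        unfolding C_def by (simp add: integral_mult_right)
      finally show ?thesis by simp
    qed
    ultimately have "\<bar>Kf \<nu> k (z+h) - Kf \<nu> k z + h * Kf \<nu> (Suc k) z\<bar> \<le> h^2 * C" by simp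
    moreover have "(Kf \<nu> k (z+h) - Kf \<nu> k z) / h - (- Kf \<nu> (Suc k) z) = (Kf \<nu> k (z+h) - Kf \<nu> k z + h * Kf \<nu> (Suc k) z) / h"
      using h by (simp add: field_simps)
    ultimately show ?thesis using h
    proof -
      assume A: "\<bar>Kf \<nu> k (z+h) - Kf \<nu> k z + h * Kf \<nu> (Suc k) z\<bar> \<le> h^2 * C"
      assume B: "(Kf \<nu> k (z+h) - Kf \<nu> k z) / h - (- Kf \<nu> (Suc k) z) = (Kf \<nu> k (z+h) - Kf \<nu> k z + h * Kf \<nu> (Suc k) z) / h"
      have hp: "\<bar>h\<bar> > 0" using h by simp
      have "\<bar>(Kf \<nu> k (z+h) - Kf \<nu> k z + h * Kf \<nu> (Suc k) z) / h\<bar> \<le> h^2 * C / \<bar>h\<bar>"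
        unfolding abs_divide using A hp by (intro divide_right_mono) auto
      also have "h^2 * C / \<bar>h\<bar> = C * \<bar>h\<bar>"
      proof -
        show ?thesis using hp by (cases "h > 0") (auto simp: field_simps power2_eq_square)
      qed
      finally show ?thesis unfolding B .
    qed
  qed
  show ?thesis
    unfolding DERIV_def
  proof (rule LIM_zero_cancel, rule Lim_null_comparison)
    show "\<forall>\<^sub>F h in at 0. norm ((Kf \<nu> k (z+h) - Kf \<nu> k z) / h - (- Kf \<nu> (Suc k) z)) \<le> C * \<bar>h\<bar>"
    proof -
      have "\<forall>\<^sub>F h in at (0::real). h \<noteq> 0 \<and> \<bar>h\<bar> \<le> 1"
        unfolding eventually_at by (intro exI[of _ 1]) auto
      then show ?thesis by eventually_elim (use key in auto)
    qed
    show "((\<lambda>h. C * \<bar>h\<bar>) \<longlongrightarrow> 0) (at 0)"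
      by (rule tendsto_mult_right_zero[OF tendsto_rabs_zero[OF tendsto_ident_at]])
  qed
qed


definition MM :: "real \<Rightarrow> real" where "MM s = 2 powr ((s-1)/2) * Gamma ((s+1)/2)"

definition acoef :: "real \<Rightarrow> nat \<Rightarrow> real" where
  "acoef \<nu> n = (-1)^n * (MM (real n + 1 - \<nu>) - real n * MM (real n - 1 - \<nu>)) / fact n"

lemma not_npi: "(x::real) > 0 \<Longrightarrow> x \<notin> \<int>\<^sub>\<le>\<^sub>0"
  using nonpos_Ints_nonpos by force

lemma dup_real:
  assumes "x > (0::real)"
  shows "Gamma x * Gamma (x + 1/2) = 2 powr (1 - 2*x) * sqrt pi * Gamma (2*x)"
proof -
  have a: "complex_of_real x \<notin> \<int>\<^sub>\<le>\<^sub>0" "complex_of_real x + 1/2 \<notin> \<int>\<^sub>\<le>\<^sub>0"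
  proof -
    show "complex_of_real x \<notin> \<int>\<^sub>\<le>\<^sub>0" using not_npi[OF assms] by (simp add: of_real_in_nonpos_Ints_iff)
    have "complex_of_real x + 1/2 = complex_of_real (x + 1/2)" by simp
    moreover have "x + 1/2 \<notin> \<int>\<^sub>\<le>\<^sub>0" using not_npi[of "x+1/2"] assms by simp
    ultimately show "complex_of_real x + 1/2 \<notin> \<int>\<^sub>\<le>\<^sub>0" by (metis of_real_in_nonpos_Ints_iff)
  qed
  have E: "Gamma (complex_of_real x) * Gamma (complex_of_real x + 1/2) =
        exp ((1 - 2 * complex_of_real x) * of_real (ln 2)) * of_real (sqrt pi) * Gamma (2 * complex_of_real x)"
    by (rule Gamma_legendre_duplication[OF a])
  have h1: "complex_of_real x + 1/2 = complex_of_real (x + 1/2)" by simp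
  have h2: "2 * complex_of_real x = complex_of_real (2*x)" by simp
  have h3: "(1 - 2 * complex_of_real x) * of_real (ln 2) = complex_of_real ((1 - 2*x) * ln 2)" by simp
  have "complex_of_real (Gamma x * Gamma (x + 1/2)) = complex_of_real (exp ((1 - 2*x) * ln 2) * sqrt pi * Gamma (2*x))"
  proof -
    have E2: "Gamma (complex_of_real x) * Gamma (complex_of_real (x + 1/2)) =
        exp (complex_of_real ((1 - 2*x) * ln 2)) * of_real (sqrt pi) * Gamma (complex_of_real (2*x))"
      by (subst h3[symmetric], subst h2[symmetric], subst h1[symmetric], rule E)
    then show ?thesis by (simp only: Gamma_complex_of_real exp_of_real of_real_mult[symmetric])
  qed
  then have "Gamma x * Gamma (x + 1/2) = exp ((1 - 2*x) * ln 2) * sqrt pi * Gamma (2*x)"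
    by (simp only: of_real_eq_iff)
  also have "exp ((1 - 2*x) * ln 2) = 2 powr (1 - 2*x)" by (simp add: powr_def)
  finally show ?thesis .
qed

lemma dup1:
  assumes "\<nu> < 1"
  shows "rGamma (1-\<nu>) * Gamma (1 - \<nu>/2) = 2 powr \<nu> * sqrt pi * rGamma ((1-\<nu>)/2)"
    and "rGamma (1-\<nu>) * Gamma ((1 - \<nu>)/2) = 2 powr \<nu> * sqrt pi * rGamma (1 - \<nu>/2)"
proof -
  have d: "Gamma ((1-\<nu>)/2) * Gamma ((1-\<nu>)/2 + 1/2) = 2 powr (1 - 2*((1-\<nu>)/2)) * sqrt pi * Gamma (2*((1-\<nu>)/2))"
    by (rule dup_real) (use assms in simp)
  have e1: "(1-\<nu>)/2 + 1/2 = 1 - \<nu>/2" by (simp add: field_simps)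
  have e2: "1 - 2*((1-\<nu>)/2) = \<nu>" by (simp add: field_simps)
  have e3: "2*((1-\<nu>)/2) = 1 - \<nu>" by simp
  have D: "Gamma ((1-\<nu>)/2) * Gamma (1 - \<nu>/2) = 2 powr \<nu> * sqrt pi * Gamma (1 - \<nu>)"
    using d unfolding e1 e3 by simp
  have p1: "Gamma (1-\<nu>) > 0" "Gamma ((1-\<nu>)/2) > 0" "Gamma (1 - \<nu>/2) > 0" using assms by auto
  show "rGamma (1-\<nu>) * Gamma (1 - \<nu>/2) = 2 powr \<nu> * sqrt pi * rGamma ((1-\<nu>)/2)"
    using D p1 by (simp add: rGamma_inverse_Gamma field_simps)
  show "rGamma (1-\<nu>) * Gamma ((1 - \<nu>)/2) = 2 powr \<nu> * sqrt pi * rGamma (1 - \<nu>/2)"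
    using D p1 by (simp add: rGamma_inverse_Gamma field_simps)
qed

lemma two_powr_nat: "2 powr (real j + c) = 2^j * 2 powr c"
  by (simp add: powr_add powr_realpow)

lemma acoef_even:
  assumes "\<nu> < 1"
  shows "acoef \<nu> (2*k) * fact (2*k) = 2 powr (real k - \<nu>/2) * Gamma (1 - \<nu>/2) * pochhammer (-\<nu>/2) k"
proof (cases k)
  case 0
  then show ?thesis by (simp add: acoef_def MM_def field_simps)
next
  case (Suc j)
  define G where "G = Gamma (real j + 1 - \<nu>/2)"
  have n: "real (2*k) = 2 * real j + 2" using Suc by simp
  have m1: "MM (real (2*k) + 1 - \<nu>) = 2 powr (real j + 1 - \<nu>/2) * ((real j + 1 - \<nu>/2) * G)"
  proof -
    have a1: "(real (2*k) + 1 - \<nu> - 1)/2 = real j + 1 - \<nu>/2" using n by (simp add: field_simps)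
    have a2: "(real (2*k) + 1 - \<nu> + 1)/2 = (real j + 1 - \<nu>/2) + 1" using n by (simp add: field_simps)
    have a3: "Gamma ((real j + 1 - \<nu>/2) + 1) = (real j + 1 - \<nu>/2) * G"
      unfolding G_def by (rule Gamma_plus1) (rule not_npi, use assms in simp)
    show ?thesis unfolding MM_def a1 a2 a3 ..
  qed
  have m2: "MM (real (2*k) - 1 - \<nu>) = 2 powr (real j - \<nu>/2) * G"
  proof -
    have a1: "(real (2*k) - 1 - \<nu> - 1)/2 = real j - \<nu>/2" using n by (simp add: field_simps)
    have a2: "(real (2*k) - 1 - \<nu> + 1)/2 = real j + 1 - \<nu>/2" using n by (simp add: field_simps)
    show ?thesis unfolding MM_def a1 a2 G_def ..
  qed
  have pG: "G = pochhammer (1 - \<nu>/2) j * Gamma (1 - \<nu>/2)"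
  proof -
    have "pochhammer (1-\<nu>/2) j = Gamma (1-\<nu>/2 + real j) / Gamma (1-\<nu>/2)"
      by (rule pochhammer_Gamma[OF not_npi]) (use assms in simp)
    moreover have "1-\<nu>/2 + real j = real j + 1 - \<nu>/2" by simp
    moreover have "Gamma (1-\<nu>/2) > 0" using assms by simp
    ultimately show ?thesis unfolding G_def by simp
  qed
  have pp: "pochhammer (-\<nu>/2) k = (-\<nu>/2) * pochhammer (1 - \<nu>/2) j"
    using Suc by (simp add: pochhammer_rec add_ac)
  have w1: "2 powr (real j + 1 - \<nu>/2) = 2^j * 2 * 2 powr (-\<nu>/2)"
  proof -
    have e: "real (Suc j) + -\<nu>/2 = real j + 1 - \<nu>/2" by simp
    show ?thesis using two_powr_nat[of "Suc j" "-\<nu>/2"] unfolding e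
      by (metis power_Suc mult.commute)
  qed
  have w2: "2 powr (real j - \<nu>/2) = 2^j * 2 powr (-\<nu>/2)"
    using two_powr_nat[of j "- \<nu>/2"] by simp
  have w3: "2 powr (real k - \<nu>/2) = 2^j * 2 * 2 powr (-\<nu>/2)"
  proof -
    have "real k - \<nu>/2 = real j + 1 - \<nu>/2" using Suc by simp
    then show ?thesis using w1 by (simp only:)
  qed
  have "acoef \<nu> (2*k) * fact (2*k) = MM (real (2*k) + 1 - \<nu>) - real (2*k) * MM (real (2*k) - 1 - \<nu>)"
    by (simp add: acoef_def)
  also have "\<dots> = 2^j * 2 powr (-\<nu>/2) * G * (- \<nu>)"
    unfolding m1 m2 w1 w2 using Suc by (simp add: algebra_simps)
  also have "\<dots> = 2 powr (real k - \<nu>/2) * Gamma (1 - \<nu>/2) * pochhammer (-\<nu>/2) k"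
    unfolding w3 pp pG by (simp add: algebra_simps)
  finally show ?thesis .
qed

lemma acoef_odd:
  assumes "\<nu> < 1"
  shows "acoef \<nu> (2*k+1) * fact (2*k+1) = \<nu> * (2^k * 2 powr (-(1+\<nu>)/2)) * Gamma ((1-\<nu>)/2) * pochhammer ((1-\<nu>)/2) k"
proof -
  define G where "G = Gamma (real k + (1-\<nu>)/2)"
  define Q where "Q = 2 powr (-(1+\<nu>)/2)"
  have m1: "MM (real (2*k+1) + 1 - \<nu>) = 2^k * 2 * Q * ((real k + (1-\<nu>)/2) * G)"
  proof -
    have a1: "(real (2*k+1) + 1 - \<nu> - 1)/2 = real (Suc k) + (-(1+\<nu>)/2)" by (simp add: field_simps)
    have a2: "(real (2*k+1) + 1 - \<nu> + 1)/2 = (real k + (1-\<nu>)/2) + 1" by (simp add: field_simps)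
    have pos: "real k + (1-\<nu>)/2 > 0" using assms by (simp add: field_simps)
    have a3: "Gamma ((real k + (1-\<nu>)/2) + 1) = (real k + (1-\<nu>)/2) * G"
      unfolding G_def by (rule Gamma_plus1) (rule not_npi[OF pos])
    show ?thesis unfolding MM_def a1 a2 a3 two_powr_nat Q_def by simp
  qed
  have m2: "MM (real (2*k+1) - 1 - \<nu>) = 2^k * Q * G"
  proof -
    have a1: "(real (2*k+1) - 1 - \<nu> - 1)/2 = real k + (-(1+\<nu>)/2)" by (simp add: field_simps)
    have a2: "(real (2*k+1) - 1 - \<nu> + 1)/2 = real k + (1-\<nu>)/2" by (simp add: field_simps)
    show ?thesis unfolding MM_def a1 a2 two_powr_nat Q_def G_def ..
  qed
  have pG: "G = pochhammer ((1-\<nu>)/2) k * Gamma ((1-\<nu>)/2)"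
  proof -
    have "pochhammer ((1-\<nu>)/2) k = Gamma ((1-\<nu>)/2 + real k) / Gamma ((1-\<nu>)/2)"
      by (rule pochhammer_Gamma[OF not_npi]) (use assms in simp)
    moreover have "Gamma ((1-\<nu>)/2) > 0" using assms by simp
    ultimately show ?thesis unfolding G_def by (simp add: add_ac)
  qed
  have "acoef \<nu> (2*k+1) * fact (2*k+1) = - (MM (real (2*k+1) + 1 - \<nu>) - real (2*k+1) * MM (real (2*k+1) - 1 - \<nu>))"
    by (simp add: acoef_def)
  also have "\<dots> = \<nu> * (2^k * Q) * G"
    unfolding m1 m2 by (simp add: field_simps)
  finally show ?thesis unfolding pG Q_def by (simp add: algebra_simps)
qed

lemma poch32: "pochhammer (3/2::real) k = (2 * real k + 1) * pochhammer (1/2) k"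
proof -
  have "pochhammer (1/2::real) (Suc k) = 1/2 * pochhammer (3/2) k"
    by (simp add: pochhammer_rec)
  moreover have "pochhammer (1/2::real) (Suc k) = (1/2 + real k) * pochhammer (1/2) k"
    by (simp add: pochhammer_rec')
  ultimately show ?thesis by (simp add: field_simps)
qed

lemma poch12_pos: "pochhammer (1/2::real) k > 0"
  by (rule pochhammer_pos) simp

lemma even_coef:
  assumes "\<nu> < 1"
  shows "rGamma (1-\<nu>) * acoef \<nu> (2*k) * z^(2*k) =
    (2 powr (\<nu>/2) * sqrt pi * rGamma ((1-\<nu>)/2)) * (pochhammer (-\<nu>/2) k / pochhammer (1/2) k * (z^2/2)^k / fact k)"
proof -
  have f: "fact (2*k) = (2^(2*k) * pochhammer (1/2) k * fact k :: real)" by (rule fact_double)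
  have fp: "fact (2*k) > (0::real)" by simp
  have a: "acoef \<nu> (2*k) = 2 powr (real k - \<nu>/2) * Gamma (1 - \<nu>/2) * pochhammer (-\<nu>/2) k / fact (2*k)"
    using acoef_even[OF assms, of k] fp by (simp add: field_simps)
  have d: "rGamma (1-\<nu>) * Gamma (1 - \<nu>/2) = 2 powr \<nu> * sqrt pi * rGamma ((1-\<nu>)/2)"
    by (rule dup1(1)[OF assms])
  have w1: "2 powr (real k - \<nu>/2) = 2^k * 2 powr (-\<nu>/2)"
    using two_powr_nat[of k "-\<nu>/2"] by simp
  have w2: "2 powr \<nu> = 2 powr (\<nu>/2) * 2 powr (\<nu>/2)"
    by (simp flip: powr_add)
  have w3: "2 powr (\<nu>/2) * 2 powr (-\<nu>/2) = 1"
    by (simp flip: powr_add)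
  have z: "z^(2*k) = (z^2)^k" by (simp add: power_mult)
  have p4: "(2::real)^(2*k) = 2^k * 2^k" by (metis mult_2 power_add)
  have "rGamma (1-\<nu>) * acoef \<nu> (2*k) * z^(2*k) =
     (rGamma (1-\<nu>) * Gamma (1 - \<nu>/2)) * 2 powr (real k - \<nu>/2) * pochhammer (-\<nu>/2) k * z^(2*k) / fact (2*k)"
    unfolding a by (simp add: algebra_simps)
  also have "\<dots> = (2 powr (\<nu>/2) * 2 powr (-\<nu>/2)) * 2 powr (\<nu>/2) * sqrt pi * rGamma ((1-\<nu>)/2) * 2^k * pochhammer (-\<nu>/2) k * (z^2)^k / (2^k * 2^k * pochhammer (1/2) k * fact k)"
    unfolding d w1 w2 z f p4 by (simp add: algebra_simps)
  also have "\<dots> = (2 powr (\<nu>/2) * sqrt pi * rGamma ((1-\<nu>)/2)) * (pochhammer (-\<nu>/2) k / pochhammer (1/2) k * (z^2/2)^k / fact k)"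
    unfolding w3 using poch12_pos[of k] by (simp add: field_simps power_divide)
  finally show ?thesis .
qed

lemma odd_coef:
  assumes "\<nu> < 1"
  shows "rGamma (1-\<nu>) * acoef \<nu> (2*k+1) * z^(2*k+1) =
    - (2 powr (\<nu>/2) * sqrt (2*pi) * z * rGamma (-\<nu>/2)) * (pochhammer ((1-\<nu>)/2) k / pochhammer (3/2) k * (z^2/2)^k / fact k)"
proof -
  have f: "fact (2*k+1) = (2 * real k + 1) * (2^k * 2^k * pochhammer (1/2) k * fact k :: real)"
  proof -
    have "fact (2*k+1) = (2 * real k + 1) * (fact (2*k) :: real)"
      by (simp add: fact_Suc)
    moreover have "(2::real)^(2*k) = 2^k * 2^k" by (metis mult_2 power_add)
    ultimately show ?thesis by (simp add: fact_double)
  qed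
  have fp: "fact (2*k+1) > (0::real)" by simp
  have a: "acoef \<nu> (2*k+1) = \<nu> * (2^k * 2 powr (-(1+\<nu>)/2)) * Gamma ((1-\<nu>)/2) * pochhammer ((1-\<nu>)/2) k / fact (2*k+1)"
    using acoef_odd[OF assms, of k] fp by (simp add: field_simps)
  have d: "rGamma (1-\<nu>) * Gamma ((1 - \<nu>)/2) = 2 powr \<nu> * sqrt pi * rGamma (1 - \<nu>/2)"
    by (rule dup1(2)[OF assms])
  have r: "\<nu> * rGamma (1 - \<nu>/2) = - 2 * rGamma (-\<nu>/2)"
  proof -
    have "(-\<nu>/2) * rGamma (-\<nu>/2 + 1) = rGamma (-\<nu>/2)" by (rule rGamma_plus1)
    moreover have "-\<nu>/2 + 1 = 1 - \<nu>/2" by simp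
    ultimately show ?thesis by (simp add: field_simps)
  qed
  have w2: "2 powr \<nu> = 2 powr (\<nu>/2) * 2 powr (\<nu>/2)"
    by (simp flip: powr_add)
  have w4: "2 powr (-(1+\<nu>)/2) * sqrt 2 = 2 powr (-\<nu>/2)"
  proof -
    have "sqrt 2 = 2 powr (1/2)" by (simp add: powr_half_sqrt)
    then show ?thesis by (simp flip: powr_add add: field_simps)
  qed
  have w3: "2 powr (\<nu>/2) * 2 powr (-\<nu>/2) = 1"
    by (simp flip: powr_add)
  have s2: "sqrt (2*pi) = sqrt 2 * sqrt pi" by (simp add: real_sqrt_mult)
  have ss: "sqrt 2 * sqrt 2 = (2::real)" by simp
  have z: "z^(2*k+1) = z * (z^2)^k" by (simp add: power_mult)
  have "rGamma (1-\<nu>) * acoef \<nu> (2*k+1) * z^(2*k+1) =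
     (rGamma (1-\<nu>) * Gamma ((1-\<nu>)/2)) * \<nu> * (2^k * 2 powr (-(1+\<nu>)/2)) * pochhammer ((1-\<nu>)/2) k * z^(2*k+1) / fact (2*k+1)"
    unfolding a by (simp add: algebra_simps)
  also have "\<dots> = 2 powr \<nu> * sqrt pi * (\<nu> * rGamma (1 - \<nu>/2)) * (2^k * 2 powr (-(1+\<nu>)/2)) * pochhammer ((1-\<nu>)/2) k * z^(2*k+1) / fact (2*k+1)"
    unfolding d by (simp add: algebra_simps)
  also have "\<dots> = - (2 powr (\<nu>/2) * sqrt (2*pi) * z * rGamma (-\<nu>/2)) * (pochhammer ((1-\<nu>)/2) k / pochhammer (3/2) k * (z^2/2)^k / fact k)"
  proof -
    have P: "2 powr (\<nu>/2) > 0" by simp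
    have w5: "2 powr (-\<nu>/2) = 1 / 2 powr (\<nu>/2)" by (simp add: powr_minus_divide)
    have qq: "2 powr (-(1+\<nu>)/2) = sqrt 2 / 2 / 2 powr (\<nu>/2)"
    proof -
      have "2 powr (-(1+\<nu>)/2) = 2 powr (-\<nu>/2) / sqrt 2" using w4 by (simp add: field_simps)
      also have "\<dots> = sqrt 2 / 2 / 2 powr (\<nu>/2)" unfolding w5
        by (simp add: field_simps)
      finally show ?thesis .
    qed
    define c where "c = 2 * real k + 1"
    have c: "c > 0" unfolding c_def by simp
    have f': "fact (2*k+1) = c * (2^k * 2^k * pochhammer (1/2) k * fact k :: real)" using f unfolding c_def .
    have p': "pochhammer (3/2) k = c * pochhammer (1/2::real) k" unfolding c_def by (rule poch32)
    show ?thesis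
      unfolding qq r f' z p' s2 w2 using poch12_pos[of k] P c
      by (simp add: field_simps power_divide)
  qed
  finally show ?thesis .
qed


lemma kummer_summable:
  fixes a b w :: real
  assumes b: "b > 0"
  shows "summable (\<lambda>n. pochhammer a n / pochhammer b n * w^n / fact n)"
proof -
  define f where "f n = pochhammer a n / pochhammer b n * w^n / fact n" for n
  define L where "L = (\<bar>a\<bar>/b + 1) * \<bar>w\<bar>"
  have L0: "L \<ge> 0" unfolding L_def using b by simp
  have step: "norm (f (Suc n)) \<le> 1/2 * norm (f n)" if n: "n \<ge> nat \<lceil>2*L\<rceil>" for n
  proof -
    have pb: "pochhammer b n > 0" using b by (intro pochhammer_pos)
    have bn: "b + real n > 0" using b by simp
    have "f (Suc n) = f n * ((a + real n) / (b + real n) * w / (real n + 1))"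
      using pb bn unfolding f_def by (simp add: pochhammer_rec' fact_Suc field_simps)
    then have "norm (f (Suc n)) = norm (f n) * (\<bar>a + real n\<bar> / (b + real n) * \<bar>w\<bar> / (real n + 1))"
      using bn by (simp add: abs_mult abs_divide)
    also have "\<bar>a + real n\<bar> / (b + real n) * \<bar>w\<bar> / (real n + 1) \<le> 1/2"
    proof -
      have "\<bar>a + real n\<bar> \<le> (\<bar>a\<bar>/b + 1) * (b + real n)"
      proof -
        have "\<bar>a\<bar> \<le> \<bar>a\<bar>/b * (b + real n)"
          using b by (simp add: field_simps mult_left_mono)
        moreover have "(\<bar>a\<bar>/b + 1) * (b + real n) = \<bar>a\<bar>/b * (b + real n) + (b + real n)"
          by (simp add: distrib_right)
        moreover have "\<bar>a + real n\<bar> \<le> \<bar>a\<bar> + real n" by simp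
        ultimately show ?thesis using b by linarith
      qed
      then have "\<bar>a + real n\<bar> / (b + real n) \<le> (\<bar>a\<bar>/b + 1)"
        using bn by (simp add: divide_le_eq)
      then have "\<bar>a + real n\<bar> / (b + real n) * \<bar>w\<bar> \<le> L"
        unfolding L_def by (intro mult_right_mono) auto
      moreover have "2 * L \<le> real n + 1"
        using n by linarith
      ultimately have "\<bar>a + real n\<bar> / (b + real n) * \<bar>w\<bar> / (real n + 1) \<le> L / (real n + 1)"
        by (intro divide_right_mono) auto
      also have "L / (real n + 1) \<le> 1/2"
        using \<open>2 * L \<le> real n + 1\<close> by (simp add: divide_le_eq)
      finally show ?thesis .
    qed
    then have "norm (f n) * (\<bar>a + real n\<bar> / (b + real n) * \<bar>w\<bar> / (real n + 1)) \<le> norm (f n) * (1/2)"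
      by (intro mult_left_mono) auto
    finally show ?thesis by simp
  qed
  have "summable f"
    by (rule summable_ratio_test[of "1/2" "nat \<lceil>2*L\<rceil>"]) (use step in auto)
  then show ?thesis unfolding f_def .
qed

definition cf :: "nat \<Rightarrow> real \<Rightarrow> real" where
  "cf n t = (-1)^n * (t^(n+1) - real n * t^(n-1)) / fact n"

lemma cser: "(\<lambda>n. cf n t * z^n) sums ((z + t) * exp (-(z*t)))"
proof -
  have e: "(\<lambda>n. (-(z*t))^n / fact n) sums exp (-(z*t))"
    using exp_converges[of "-(z*t)"] by (simp add: divide_inverse mult.commute)
  have s1: "(\<lambda>n. t * ((-(z*t))^n / fact n)) sums (t * exp (-(z*t)))"
    by (rule sums_mult[OF e])
  define g where "g n = - ((-1)^n * real n * t^(n-1) * z^n / fact n)" for n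
  have gs: "(\<lambda>n. g (Suc n)) = (\<lambda>n. z * ((-(z*t))^n / fact n))"
  proof
    fix n
    have "g (Suc n) = (-1)^n * (real (Suc n) / fact (Suc n)) * t^n * z^(Suc n)"
      by (simp add: g_def)
    also have "real (Suc n) / fact (Suc n) = 1 / (fact n :: real)"
      by (simp add: fact_Suc)
    finally show "g (Suc n) = z * ((-(z*t))^n / fact n)"
      by (simp add: power_mult_distrib power_minus' algebra_simps)
  qed
  have "(\<lambda>n. g (Suc n)) sums (z * exp (-(z*t)))"
    unfolding gs by (rule sums_mult[OF e])
  then have "g sums (z * exp (-(z*t)) + g 0)"
    by (simp only: sums_Suc_iff)
  then have s2: "g sums (z * exp (-(z*t)))"
    by (simp add: g_def)
  have "(\<lambda>n. t * ((-(z*t))^n / fact n) + g n) sums (t * exp (-(z*t)) + z * exp (-(z*t)))"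
    by (rule sums_add[OF s1 s2])
  moreover have "t * ((-(z*t))^n / fact n) + g n = cf n t * z^n" for n
    by (simp add: cf_def g_def power_mult_distrib power_minus' field_simps)
  ultimately show ?thesis by (simp add: algebra_simps)
qed

lemma expsum_le:
  assumes "x \<ge> (0::real)"
  shows "(\<Sum>n<N. x^n / fact n) \<le> exp x"
proof -
  have e: "(\<lambda>n. x^n / fact n) sums exp x"
    using exp_converges[of x] by (simp add: divide_inverse mult.commute)
  have "(\<Sum>n<N. x^n / fact n) \<le> suminf (\<lambda>n. x^n / fact n)"
    by (rule sum_le_suminf) (use e assms in \<open>auto simp: sums_iff\<close>)
  also have "\<dots> = exp x" using e by (simp add: sums_iff)
  finally show ?thesis .
qed

lemma cpart_bound:
  assumes t: "t \<ge> 0"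
  shows "\<bar>\<Sum>n<N. cf n t * z^n\<bar> \<le> (t + \<bar>z\<bar>) * exp (\<bar>z\<bar> * t)"
proof -
  define h where "h n = real n * t^(n-1) * \<bar>z\<bar>^n / fact n" for n
  have "\<bar>\<Sum>n<N. cf n t * z^n\<bar> \<le> (\<Sum>n<N. \<bar>cf n t * z^n\<bar>)"
    by (rule sum_abs)
  also have "\<dots> \<le> (\<Sum>n<N. t * ((\<bar>z\<bar>*t)^n / fact n) + h n)"
  proof (rule sum_mono)
    fix n assume "n \<in> {..<N}"
    have "\<bar>t^(n+1) - real n * t^(n-1)\<bar> \<le> t^(n+1) + real n * t^(n-1)"
      using t by (simp add: abs_le_iff)
    then have "\<bar>t^(n+1) - real n * t^(n-1)\<bar> * \<bar>z\<bar>^n / fact n \<le> (t^(n+1) + real n * t^(n-1)) * \<bar>z\<bar>^n / fact n"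
      by (intro divide_right_mono mult_right_mono) auto
    moreover have "\<bar>cf n t * z^n\<bar> = \<bar>t^(n+1) - real n * t^(n-1)\<bar> * \<bar>z\<bar>^n / fact n"
      by (simp add: cf_def abs_mult power_abs abs_divide)
    moreover have "(t^(n+1) + real n * t^(n-1)) * \<bar>z\<bar>^n / fact n = t * ((\<bar>z\<bar>*t)^n / fact n) + h n"
      by (simp add: h_def power_mult_distrib field_simps)
    ultimately show "\<bar>cf n t * z^n\<bar> \<le> t * ((\<bar>z\<bar>*t)^n / fact n) + h n"
      by simp
  qed
  also have "\<dots> = t * (\<Sum>n<N. (\<bar>z\<bar>*t)^n / fact n) + (\<Sum>n<N. h n)"
    by (simp add: sum.distrib sum_distrib_left)
  also have "(\<Sum>n<N. h n) \<le> \<bar>z\<bar> * exp (\<bar>z\<bar> * t)"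
  proof -
    have "(\<Sum>n<N. h n) \<le> (\<Sum>n<Suc N. h n)"
      by (simp add: h_def t)
    also have "\<dots> = h 0 + (\<Sum>n<N. h (Suc n))"
      by (rule sum.lessThan_Suc_shift)
    also have "\<dots> = \<bar>z\<bar> * (\<Sum>n<N. (\<bar>z\<bar>*t)^n / fact n)"
    proof -
      have hs: "h (Suc n) = \<bar>z\<bar> * ((\<bar>z\<bar>*t)^n / fact n)" for n
      proof -
        have "h (Suc n) = (real (Suc n) / fact (Suc n)) * t^n * \<bar>z\<bar>^(Suc n)"
          by (simp add: h_def)
        also have "real (Suc n) / fact (Suc n) = 1 / (fact n :: real)"
          by (simp add: fact_Suc)
        finally show ?thesis by (simp add: power_mult_distrib)
      qed
      have "h 0 + (\<Sum>n<N. h (Suc n)) = (\<Sum>n<N. \<bar>z\<bar> * ((\<bar>z\<bar>*t)^n / fact n))"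
        unfolding hs by (simp add: h_def)
      then show ?thesis by (simp add: sum_distrib_left)
    qed
    also have "\<dots> \<le> \<bar>z\<bar> * exp (\<bar>z\<bar> * t)"
      by (intro mult_left_mono expsum_le) (use t in auto)
    finally show ?thesis .
  qed
  also have "t * (\<Sum>n<N. (\<bar>z\<bar>*t)^n / fact n) \<le> t * exp (\<bar>z\<bar> * t)"
    by (intro mult_left_mono expsum_le) (use t in auto)
  finally show ?thesis by (simp add: algebra_simps)
qed

lemma powr_mult_pow: "(t::real) > 0 \<Longrightarrow> t powr a * t^m = t powr (a + real m)"
  by (simp add: powr_add powr_realpow)

lemma term_int:
  assumes nu: "\<nu> < 1"
  shows "((\<lambda>t. t powr (-\<nu>) * cf n t * exp (-(t^2)/2)) has_integral acoef \<nu> n) {0<..}"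
proof -
  have p1: "t powr (-\<nu>) * t^(n+1) = t powr (real n + 1 - \<nu>)" if "t > 0" for t
  proof -
    have e: "real n + 1 - \<nu> = -\<nu> + real (n+1)" by simp
    show ?thesis unfolding e by (rule powr_mult_pow[OF that])
  qed
  have i1: "((\<lambda>t. t powr (real n + 1 - \<nu>) * exp (-(t^2)/2)) has_integral MM (real n + 1 - \<nu>)) {0<..}"
    unfolding MM_def by (rule mom) (use nu in simp)
  show ?thesis
  proof (cases n)
    case 0
    have "((\<lambda>t. t powr (real n + 1 - \<nu>) * exp (-(t^2)/2)) has_integral acoef \<nu> n) {0<..}"
      using i1 0 by (simp add: acoef_def)
    then show ?thesis
      by (rule has_integral_eq[rotated]) (use p1 0 in \<open>auto simp: cf_def\<close>)
  next
    case (Suc m)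
    have p2: "t powr (-\<nu>) * t^(n-1) = t powr (real n - 1 - \<nu>)" if "t > 0" for t
    proof -
      have e: "real n - 1 - \<nu> = -\<nu> + real (n-1)" using Suc by simp
      show ?thesis unfolding e by (rule powr_mult_pow[OF that])
    qed
    have i2: "((\<lambda>t. t powr (real n - 1 - \<nu>) * exp (-(t^2)/2)) has_integral MM (real n - 1 - \<nu>)) {0<..}"
      unfolding MM_def by (rule mom) (use nu Suc in simp)
    have "((\<lambda>t. (-1)^n / fact n * (t powr (real n + 1 - \<nu>) * exp (-(t^2)/2) - real n * (t powr (real n - 1 - \<nu>) * exp (-(t^2)/2))))
       has_integral ((-1)^n / fact n * (MM (real n + 1 - \<nu>) - real n * MM (real n - 1 - \<nu>)))) {0<..}"
      by (intro has_integral_mult_right has_integral_diff i1 i2)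
    then have "((\<lambda>t. (-1)^n / fact n * (t powr (real n + 1 - \<nu>) * exp (-(t^2)/2) - real n * (t powr (real n - 1 - \<nu>) * exp (-(t^2)/2))))
       has_integral acoef \<nu> n) {0<..}"
      by (simp add: acoef_def)
    then show ?thesis
    proof (rule has_integral_eq[rotated])
      fix t :: real assume "t \<in> {0<..}"
      then have t: "t > 0" by simp
      have "t powr (-\<nu>) * cf n t * exp (-(t^2)/2) = (-1)^n / fact n * ((t powr (-\<nu>) * t^(n+1)) * exp (-(t^2)/2) - real n * ((t powr (-\<nu>) * t^(n-1)) * exp (-(t^2)/2)))"
        by (simp add: cf_def field_simps)
      also have "\<dots> = (-1)^n / fact n * (t powr (real n + 1 - \<nu>) * exp (-(t^2)/2) - real n * (t powr (real n - 1 - \<nu>) * exp (-(t^2)/2)))"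
        using p1[OF t] p2[OF t] by simp
      finally show "(-1)^n / fact n * (t powr (real n + 1 - \<nu>) * exp (-(t^2)/2) - real n * (t powr (real n - 1 - \<nu>) * exp (-(t^2)/2))) = t powr (-\<nu>) * cf n t * exp (-(t^2)/2)"
        by simp
    qed
  qed
qed

lemma partial_int:
  assumes nu: "\<nu> < 1"
  shows "((\<lambda>t. t powr (-\<nu>) * (\<Sum>n<N. cf n t * z^n) * exp (-(t^2)/2)) has_integral (\<Sum>n<N. acoef \<nu> n * z^n)) {0<..}"
proof -
  have "((\<lambda>t. \<Sum>n<N. t powr (-\<nu>) * cf n t * exp (-(t^2)/2) * z^n) has_integral (\<Sum>n<N. acoef \<nu> n * z^n)) {0<..}"
    by (intro has_integral_sum finite_lessThan has_integral_mult_left term_int nu)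
  then show ?thesis
    by (rule has_integral_eq[rotated]) (simp add: sum_distrib_left sum_distrib_right algebra_simps)
qed

definition Jn :: "real \<Rightarrow> real \<Rightarrow> real" where
  "Jn \<nu> z = integral {0<..} (\<lambda>t. t powr (-\<nu>) * (z + t) * exp (-(z*t) - t^2/2))"

lemma J_series:
  assumes nu: "\<nu> < 1"
  shows "(\<lambda>n. acoef \<nu> n * z^n) sums Jn \<nu> z"
proof -
  define f where "f N t = t powr (-\<nu>) * (\<Sum>n<N. cf n t * z^n) * exp (-(t^2)/2)" for N t
  define h where "h t = t powr (1-\<nu>) * exp (\<bar>z\<bar>*t - t^2/2) + \<bar>z\<bar> * (t powr (-\<nu>) * exp (\<bar>z\<bar>*t - t^2/2))" for t
  define g where "g t = t powr (-\<nu>) * (z + t) * exp (-(z*t) - t^2/2)" for t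
  have fi: "f N integrable_on {0<..}" for N
    unfolding f_def using partial_int[OF nu] by blast
  have hi: "h integrable_on {0<..}"
    unfolding h_def
    by (intro integrable_add intcm intb) (use nu in auto)
  have le: "norm (f N t) \<le> h t" if "t \<in> {0<..}" for N t
  proof -
    have t: "t > 0" using that by simp
    have "norm (f N t) = t powr (-\<nu>) * \<bar>\<Sum>n<N. cf n t * z^n\<bar> * exp (-(t^2)/2)"
      by (simp add: f_def abs_mult)
    also have "\<dots> \<le> t powr (-\<nu>) * ((t + \<bar>z\<bar>) * exp (\<bar>z\<bar> * t)) * exp (-(t^2)/2)"
      by (intro mult_right_mono mult_left_mono cpart_bound) (use t in auto)
    also have "\<dots> = h t"
    proof -
      have "t powr (1-\<nu>) = t * t powr (-\<nu>)" using t by (simp add: powr_diff powr_minus field_simps)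
      moreover have "exp (\<bar>z\<bar>*t - t^2/2) = exp (\<bar>z\<bar> * t) * exp (-(t^2)/2)"
        by (simp flip: exp_add)
      ultimately show ?thesis by (simp add: h_def algebra_simps)
    qed
    finally show ?thesis .
  qed
  have conv: "(\<lambda>N. f N t) \<longlonglongrightarrow> g t" if "t \<in> {0<..}" for t
  proof -
    have "(\<lambda>N. \<Sum>n<N. cf n t * z^n) \<longlonglongrightarrow> (z + t) * exp (-(z*t))"
      using cser[of t z] by (simp add: sums_def)
    then have "(\<lambda>N. t powr (-\<nu>) * (\<Sum>n<N. cf n t * z^n) * exp (-(t^2)/2)) \<longlonglongrightarrow> t powr (-\<nu>) * ((z + t) * exp (-(z*t))) * exp (-(t^2)/2)"
      by (intro tendsto_intros)
    moreover have "t powr (-\<nu>) * ((z + t) * exp (-(z*t))) * exp (-(t^2)/2) = g t"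
      by (simp add: g_def algebra_simps flip: exp_add)
    ultimately show ?thesis unfolding f_def by (simp only:)
  qed
  have "(\<lambda>N. integral {0<..} (f N)) \<longlonglongrightarrow> integral {0<..} g"
    by (rule dominated_convergence(2)[OF fi hi le conv])
  moreover have "integral {0<..} (f N) = (\<Sum>n<N. acoef \<nu> n * z^n)" for N
    unfolding f_def using partial_int[OF nu] by (rule integral_unique)
  moreover have "integral {0<..} g = Jn \<nu> z" unfolding g_def Jn_def ..
  ultimately show ?thesis by (simp add: sums_def)
qed

lemma pcD_rep:
  assumes nu: "\<nu> < 1"
  shows "pcD \<nu> z = exp (-(z^2)/4) * (rGamma (1-\<nu>) * Jn \<nu> z)"
proof -
  define f where "f n = rGamma (1-\<nu>) * acoef \<nu> n * z^n" for n
  define A where "A = 2 powr (\<nu>/2) * sqrt pi * rGamma ((1-\<nu>)/2)"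
  define B where "B = 2 powr (\<nu>/2) * sqrt (2*pi) * z * rGamma (-\<nu>/2)"
  define u where "u k = pochhammer (-\<nu>/2) k / pochhammer (1/2) k * (z^2/2)^k / fact k" for k
  define v where "v k = pochhammer ((1-\<nu>)/2) k / pochhammer (3/2) k * (z^2/2)^k / fact k" for k
  have fs: "f sums (rGamma (1-\<nu>) * Jn \<nu> z)"
    unfolding f_def using sums_mult[OF J_series[OF nu], of "rGamma (1-\<nu>)"] by (simp add: mult.assoc)
  have g: "(\<lambda>n. sum f {n*2..<n*2+2}) sums (rGamma (1-\<nu>) * Jn \<nu> z)"
    by (rule sums_group[OF fs]) simp
  have fe: "f (2*k) = A * u k" for k
    unfolding f_def A_def u_def by (rule even_coef[OF nu])
  have fo: "f (2*k+1) = - B * v k" for k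
    unfolding f_def B_def v_def by (rule odd_coef[OF nu])
  have us: "u sums kummerM (-\<nu>/2) (1/2) (z^2/2)"
    unfolding u_def kummerM_def by (rule summable_sums[OF kummer_summable]) simp
  have vs: "v sums kummerM ((1-\<nu>)/2) (3/2) (z^2/2)"
    unfolding v_def kummerM_def by (rule summable_sums[OF kummer_summable]) simp
  have "(\<lambda>k. A * u k + (- B) * v k) sums (A * kummerM (-\<nu>/2) (1/2) (z^2/2) + (- B) * kummerM ((1-\<nu>)/2) (3/2) (z^2/2))"
    by (intro sums_add sums_mult us vs)
  moreover have "sum f {n*2..<n*2+2} = A * u n + (- B) * v n" for n
  proof -
    have "{n*2..<n*2+2} = {2*n, 2*n+1}" by auto
    then show ?thesis using fe[of n] fo[of n] by simp
  qed
  ultimately have "(\<lambda>n. sum f {n*2..<n*2+2}) sums (A * kummerM (-\<nu>/2) (1/2) (z^2/2) + (- B) * kummerM ((1-\<nu>)/2) (3/2) (z^2/2))"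
    by simp
  with g have E: "rGamma (1-\<nu>) * Jn \<nu> z = A * kummerM (-\<nu>/2) (1/2) (z^2/2) - B * kummerM ((1-\<nu>)/2) (3/2) (z^2/2)"
    using sums_unique2 by fastforce
  show ?thesis
    unfolding pcD_def E A_def B_def by (simp add: algebra_simps)
qed


definition zz :: "real \<Rightarrow> real \<Rightarrow> real \<Rightarrow> real" where
  "zz y \<xi> x = (x^2 + y^2 + \<xi>^2) / (2*x*y*\<xi>)"

definition Phi :: "real \<Rightarrow> real \<Rightarrow> real \<Rightarrow> real" where
  "Phi y \<xi> x = 1/(2*x^2) + 1/(2*y^2) + 1/(2*\<xi>^2) - (zz y \<xi> x)^2/2"

definition tv :: "real \<Rightarrow> real \<Rightarrow> real \<Rightarrow> real \<times> real \<times> real \<times> nat \<Rightarrow> real \<Rightarrow> real" where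
  "tv \<nu> y \<xi> t x = (case t of (c,e,j,k) \<Rightarrow> c * x powr e * \<xi> powr j * exp (Phi y \<xi> x) * Kf \<nu> k (zz y \<xi> x))"

definition dterm :: "real \<Rightarrow> real \<times> real \<times> real \<times> nat \<Rightarrow> (real \<times> real \<times> real \<times> nat) list" where
  "dterm y t = (case t of (c,e,j,k) \<Rightarrow>
     [(c*e, e-1, j, k), (-c/2, e-3, j, k), (-c/(4*y^2), e+1, j-2, k), (c*y^2/4, e-3, j-2, k),
      (c/(4*y^2), e-3, j+2, k), (-c/(2*y), e, j-1, Suc k), (c*y/2, e-2, j-1, Suc k), (c/(2*y), e-2, j+1, Suc k)])"

definition tls :: "real \<Rightarrow> real \<Rightarrow> real \<Rightarrow> (real \<times> real \<times> real \<times> nat) list \<Rightarrow> real \<Rightarrow> real" where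
  "tls \<nu> y \<xi> L x = sum_list (map (\<lambda>t. tv \<nu> y \<xi> t x) L)"

definition dl :: "real \<Rightarrow> (real \<times> real \<times> real \<times> nat) list \<Rightarrow> (real \<times> real \<times> real \<times> nat) list" where
  "dl y L = concat (map (dterm y) L)"

lemma zz_deriv:
  assumes "x > 0" "y > 0" "\<xi> > 0"
  shows "(zz y \<xi> has_real_derivative (1/(2*y*\<xi>) - y/(2*x^2*\<xi>) - \<xi>/(2*x^2*y))) (at x)"
proof -
  have "((\<lambda>x. (x^2 + y^2 + \<xi>^2) / (2*x*y*\<xi>)) has_real_derivative
     ((2*x) * (2*x*y*\<xi>) - (x^2 + y^2 + \<xi>^2) * (2*y*\<xi>)) / (2*x*y*\<xi>)^2) (at x)"
    using assms by (auto intro!: derivative_eq_intros simp: power2_eq_square)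
  moreover have "((2*x) * (2*x*y*\<xi>) - (x^2 + y^2 + \<xi>^2) * (2*y*\<xi>)) / (2*x*y*\<xi>)^2
      = 1/(2*y*\<xi>) - y/(2*x^2*\<xi>) - \<xi>/(2*x^2*y)"
    using assms by (simp add: field_simps power2_eq_square)
  ultimately show ?thesis unfolding zz_def[abs_def] by simp
qed

lemma Phi_deriv:
  assumes "x > 0" "y > 0" "\<xi> > 0"
  shows "(Phi y \<xi> has_real_derivative
     (-1/(2*x^3) - x/(4*y^2*\<xi>^2) + y^2/(4*x^3*\<xi>^2) + \<xi>^2/(4*x^3*y^2))) (at x)"
proof -
  have d: "((\<lambda>x. 1/(2*x^2) + 1/(2*y^2) + 1/(2*\<xi>^2) - (zz y \<xi> x)^2/2) has_real_derivative
     (- (2*(2*x)) / (2*x^2)^2 - zz y \<xi> x * (1/(2*y*\<xi>) - y/(2*x^2*\<xi>) - \<xi>/(2*x^2*y)))) (at x)"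
    using assms by (auto intro!: derivative_eq_intros zz_deriv simp: power2_eq_square)
  moreover have "- (2*(2*x)) / (2*x^2)^2 - zz y \<xi> x * (1/(2*y*\<xi>) - y/(2*x^2*\<xi>) - \<xi>/(2*x^2*y))
     = -1/(2*x^3) - x/(4*y^2*\<xi>^2) + y^2/(4*x^3*\<xi>^2) + \<xi>^2/(4*x^3*y^2)"
    using assms unfolding zz_def by (simp add: field_simps power2_eq_square power3_eq_cube)
  ultimately show ?thesis unfolding Phi_def[abs_def] by simp
qed

lemma tv_deriv:
  assumes x: "x > 0" and y: "y > 0" and xi: "\<xi> > 0" and nu: "\<nu> < 1"
  shows "(tv \<nu> y \<xi> t has_real_derivative tls \<nu> y \<xi> (dterm y t) x) (at x)"
proof -
  obtain c e j k where t: "t = (c,e,j,k)" by (cases t) auto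
  define Phd where "Phd = -1/(2*x^3) - x/(4*y^2*\<xi>^2) + y^2/(4*x^3*\<xi>^2) + \<xi>^2/(4*x^3*y^2)"
  define zd where "zd = 1/(2*y*\<xi>) - y/(2*x^2*\<xi>) - \<xi>/(2*x^2*y)"
  have d1: "((\<lambda>x. x powr e) has_real_derivative e * x powr (e - 1)) (at x)"
    by (rule has_real_derivative_powr[OF x])
  have d2: "((\<lambda>x. exp (Phi y \<xi> x)) has_real_derivative exp (Phi y \<xi> x) * Phd) (at x)"
    unfolding Phd_def by (rule DERIV_fun_exp[OF Phi_deriv[OF x y xi]])
  have d3: "((\<lambda>x. Kf \<nu> k (zz y \<xi> x)) has_real_derivative (- Kf \<nu> (Suc k) (zz y \<xi> x)) * zd) (at x)"
    unfolding zd_def by (rule DERIV_chain2[OF K_deriv[OF nu] zz_deriv[OF x y xi]])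
  note D1 = DERIV_cmult[OF d1, of c]
  note D2 = DERIV_mult[OF D1 DERIV_const[of "\<xi> powr j"]]
  note D3 = DERIV_mult[OF D2 d2]
  note D4 = DERIV_mult[OF D3 d3]
  have f: "tv \<nu> y \<xi> t = (\<lambda>x. c * x powr e * \<xi> powr j * exp (Phi y \<xi> x) * Kf \<nu> k (zz y \<xi> x))"
    by (rule ext) (simp add: tv_def t)
  define E where "E = exp (Phi y \<xi> x)"
  define K0 where "K0 = Kf \<nu> k (zz y \<xi> x)"
  define K1 where "K1 = Kf \<nu> (Suc k) (zz y \<xi> x)"
  have r: "tls \<nu> y \<xi> (dterm y t) x =
     c*e * x powr (e-1) * \<xi> powr j * E * K0 + (-c/2) * x powr (e-3) * \<xi> powr j * E * K0
   + (-c/(4*y^2)) * x powr (e+1) * \<xi> powr (j-2) * E * K0 + (c*y^2/4) * x powr (e-3) * \<xi> powr (j-2) * E * K0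
   + (c/(4*y^2)) * x powr (e-3) * \<xi> powr (j+2) * E * K0 + (-c/(2*y)) * x powr e * \<xi> powr (j-1) * E * K1
   + (c*y/2) * x powr (e-2) * \<xi> powr (j-1) * E * K1 + (c/(2*y)) * x powr (e-2) * \<xi> powr (j+1) * E * K1"
    unfolding E_def K0_def K1_def by (simp add: tls_def dterm_def tv_def t)
  show ?thesis
    unfolding f
    apply (rule DERIV_cong[OF D4])
    unfolding r Phd_def zd_def E_def[symmetric] K0_def[symmetric] K1_def[symmetric]
    using x y xi by (simp add: powr_diff powr_add powr_numeral field_simps power2_eq_square power3_eq_cube)
qed

lemma tl_append: "tls \<nu> y \<xi> (A @ B) x = tls \<nu> y \<xi> A x + tls \<nu> y \<xi> B x"
  by (simp add: tls_def)

lemma tl_deriv: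
  assumes x: "x > 0" and y: "y > 0" and xi: "\<xi> > 0" and nu: "\<nu> < 1"
  shows "(tls \<nu> y \<xi> L has_real_derivative tls \<nu> y \<xi> (dl y L) x) (at x)"
proof (induction L)
  case Nil
  have "tls \<nu> y \<xi> [] = (\<lambda>x. 0)" by (rule ext) (simp add: tls_def)
  then show ?case by (simp add: dl_def tls_def)
next
  case (Cons t L)
  have f: "tls \<nu> y \<xi> (t # L) = (\<lambda>x. tv \<nu> y \<xi> t x + tls \<nu> y \<xi> L x)"
    by (rule ext) (simp add: tls_def)
  have "dl y (t # L) = dterm y t @ dl y L" by (simp add: dl_def)
  then have g: "tls \<nu> y \<xi> (dl y (t # L)) x = tls \<nu> y \<xi> (dterm y t) x + tls \<nu> y \<xi> (dl y L) x"
    by (simp add: tl_append)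
  show ?case unfolding f g
    by (rule DERIV_add[OF tv_deriv[OF x y xi nu] Cons.IH])
qed

lemma deriv_rep:
  assumes y: "y > 0" and xi: "\<xi> > 0" and nu: "\<nu> < 1"
    and F: "\<And>x. x > 0 \<Longrightarrow> F x = tls \<nu> y \<xi> L x"
  shows "x > 0 \<Longrightarrow> (deriv ^^ p) F x = tls \<nu> y \<xi> ((dl y ^^ p) L) x"
proof (induction p arbitrary: x)
  case 0
  then show ?case using F by simp
next
  case (Suc p)
  have ev: "eventually (\<lambda>u. (deriv ^^ p) F u = tls \<nu> y \<xi> ((dl y ^^ p) L) u) (nhds x)"
  proof -
    have "eventually (\<lambda>u. u \<in> {0<..}) (nhds x)"
      by (rule eventually_nhds_in_open) (use Suc.prems in auto)
    then show ?thesis by eventually_elim (use Suc.IH in auto)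
  qed
  have "(deriv ^^ Suc p) F x = deriv ((deriv ^^ p) F) x" by simp
  also have "\<dots> = deriv (tls \<nu> y \<xi> ((dl y ^^ p) L)) x"
    by (rule deriv_cong_ev[OF ev refl])
  also have "\<dots> = tls \<nu> y \<xi> (dl y ((dl y ^^ p) L)) x"
    by (rule DERIV_imp_deriv[OF tl_deriv[OF Suc.prems y xi nu]])
  finally show ?case by simp
qed

lemma zz_pos: "x > 0 \<Longrightarrow> y > 0 \<Longrightarrow> \<xi> > 0 \<Longrightarrow> zz y \<xi> x > 0"
  unfolding zz_def by (intro divide_pos_pos add_pos_nonneg) auto

definition tb :: "real \<Rightarrow> real \<Rightarrow> real \<Rightarrow> (real \<times> real \<times> real \<times> nat) list \<Rightarrow> real \<Rightarrow> real" where
  "tb \<nu> y \<xi> L x = sum_list (map (\<lambda>(c,e,j,k). \<bar>c\<bar> * x powr e * \<xi> powr j * exp (Phi y \<xi> x) * Kf \<nu> k 0) L)"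

lemma tl_bound:
  assumes x: "x > 0" and y: "y > 0" and xi: "\<xi> > 0" and nu: "\<nu> < 1"
  shows "\<bar>tls \<nu> y \<xi> L x\<bar> \<le> tb \<nu> y \<xi> L x"
proof (induction L)
  case Nil
  then show ?case by (simp add: tls_def tb_def)
next
  case (Cons t L)
  obtain c e j k where t: "t = (c,e,j,k)" by (cases t) auto
  have "\<bar>tv \<nu> y \<xi> t x\<bar> = \<bar>c\<bar> * x powr e * \<xi> powr j * exp (Phi y \<xi> x) * Kf \<nu> k (zz y \<xi> x)"
    using K_nonneg[OF nu] by (simp add: tv_def t abs_mult)
  also have "\<dots> \<le> \<bar>c\<bar> * x powr e * \<xi> powr j * exp (Phi y \<xi> x) * Kf \<nu> k 0"
    by (intro mult_left_mono K_le0 nu) (use zz_pos[OF x y xi] in auto)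
  finally have a: "\<bar>tv \<nu> y \<xi> t x\<bar> \<le> \<bar>c\<bar> * x powr e * \<xi> powr j * exp (Phi y \<xi> x) * Kf \<nu> k 0" .
  have "\<bar>tls \<nu> y \<xi> (t # L) x\<bar> \<le> \<bar>tv \<nu> y \<xi> t x\<bar> + \<bar>tls \<nu> y \<xi> L x\<bar>"
    by (simp add: tls_def abs_triangle_ineq)
  also have "\<dots> \<le> tb \<nu> y \<xi> (t # L) x"
    using a Cons.IH by (simp add: tb_def t)
  finally show ?case .
qed

definition L0 :: "real \<Rightarrow> real \<Rightarrow> (real \<times> real \<times> real \<times> nat) list" where
  "L0 \<alpha> y = (let a = 2*\<alpha> - 1; C = (1 / sqrt (2*pi)) * y powr a * rGamma (1 - 2*\<alpha>) in
     [(C/(2*y), a+1, a-1, 0), (C*y/2, a-1, a-1, 0), (C/(2*y), a-1, a+1, 0), (C, a, a, 1)])"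

lemma Jn_split:
  assumes nu: "\<nu> < 1"
  shows "Jn \<nu> Z = Z * Kf \<nu> 0 Z + Kf \<nu> 1 Z"
proof -
  have i0: "(\<lambda>t. t powr (real 0 - \<nu>) * exp (-(Z*t) - t^2/2)) integrable_on {0<..}" by (rule Kint[OF nu])
  have i1: "(\<lambda>t. t powr (real 1 - \<nu>) * exp (-(Z*t) - t^2/2)) integrable_on {0<..}" by (rule Kint[OF nu])
  have "Jn \<nu> Z = integral {0<..} (\<lambda>t. Z * (t powr (real 0 - \<nu>) * exp (-(Z*t) - t^2/2)) + t powr (real 1 - \<nu>) * exp (-(Z*t) - t^2/2))"
    unfolding Jn_def
  proof (rule integral_cong)
    fix t :: real assume "t \<in> {0<..}"
    then have t: "t > 0" by simp
    have "t powr (1 - \<nu>) = t * t powr (-\<nu>)" using t by (simp add: powr_diff powr_minus field_simps)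
    then show "t powr (-\<nu>) * (Z + t) * exp (-(Z*t) - t^2/2) = Z * (t powr (real 0 - \<nu>) * exp (-(Z*t) - t^2/2)) + t powr (real 1 - \<nu>) * exp (-(Z*t) - t^2/2)"
      by (simp add: algebra_simps)
  qed
  also have "\<dots> = integral {0<..} (\<lambda>t. Z * (t powr (real 0 - \<nu>) * exp (-(Z*t) - t^2/2))) + integral {0<..} (\<lambda>t. t powr (real 1 - \<nu>) * exp (-(Z*t) - t^2/2))"
    by (rule integral_add[OF intcm[OF i0] i1])
  also have "\<dots> = Z * Kf \<nu> 0 Z + Kf \<nu> 1 Z"
    unfolding Kf_def by (simp only: integral_mult_right)
  finally show ?thesis .
qed

lemma qq_rep:
  assumes al: "\<alpha> < 1/2" and x: "x > 0" and y: "y > 0" and xi: "\<xi> > 0"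
  shows "qq \<alpha> x y \<xi> = tls (2*\<alpha>) y \<xi> (L0 \<alpha> y) x"
proof -
  define \<nu> where "\<nu> = 2*\<alpha>"
  define a where "a = 2*\<alpha> - 1"
  define C where "C = (1 / sqrt (2*pi)) * y powr a * rGamma (1 - 2*\<alpha>)"
  define Z where "Z = zz y \<xi> x"
  have nu: "\<nu> < 1" using al by (simp add: \<nu>_def)
  have Zd: "(x^2 + y^2 + \<xi>^2) / (2 * x * y * \<xi>) = Z" by (simp add: Z_def zz_def)
  have W: "(x^2 + y^2 + \<xi>^2) / (4 * x * y * \<xi>) = Z/2"
    unfolding Z_def zz_def using x y xi by (simp add: field_simps)
  have E: "exp (1 / (2 * x^2) + 1 / (2 * y^2) + 1 / (2 * \<xi>^2) - (Z/2)^2) * exp (-(Z^2)/4) = exp (Phi y \<xi> x)"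
    unfolding Phi_def Z_def[symmetric] by (simp add: field_simps power2_eq_square flip: exp_add)
  have P: "(x * y * \<xi>) powr a = x powr a * y powr a * \<xi> powr a"
    using x y xi by (simp add: powr_mult)
  have "qq \<alpha> x y \<xi> = (1 / sqrt (2*pi)) * (x * y * \<xi>) powr a * (exp (1 / (2 * x^2) + 1 / (2 * y^2) + 1 / (2 * \<xi>^2) - (Z/2)^2) * exp (-(Z^2)/4)) * (rGamma (1-\<nu>) * Jn \<nu> Z)"
    unfolding qq_def Zd W pcD_rep[OF nu, unfolded \<nu>_def] by (simp add: a_def \<nu>_def algebra_simps)
  also have "\<dots> = C * x powr a * \<xi> powr a * exp (Phi y \<xi> x) * (Z * Kf \<nu> 0 Z + Kf \<nu> 1 Z)"
    unfolding E P Jn_split[OF nu, unfolded \<nu>_def] C_def \<nu>_def by (simp add: algebra_simps add_divide_distrib)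
  also have "\<dots> = tls (2*\<alpha>) y \<xi> (L0 \<alpha> y) x"
  proof -
    define K0 where "K0 = Kf \<nu> 0 Z"
    define K1 where "K1 = Kf \<nu> 1 Z"
    define EE where "EE = exp (Phi y \<xi> x)"
    have Zexp: "Z = x/(2*y*\<xi>) + y/(2*x*\<xi>) + \<xi>/(2*x*y)"
      unfolding Z_def zz_def using x y xi by (simp add: field_simps power2_eq_square)
    have r: "tls (2*\<alpha>) y \<xi> (L0 \<alpha> y) x = C/(2*y) * x powr (a+1) * \<xi> powr (a-1) * EE * K0
      + C*y/2 * x powr (a-1) * \<xi> powr (a-1) * EE * K0 + C/(2*y) * x powr (a-1) * \<xi> powr (a+1) * EE * K0
      + C * x powr a * \<xi> powr a * EE * K1"
      by (simp add: L0_def tls_def tv_def Let_def a_def C_def \<nu>_def Z_def K0_def K1_def EE_def)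
    show ?thesis
      unfolding r K0_def[symmetric] K1_def[symmetric] EE_def[symmetric]
      unfolding Zexp using x y xi
      by (simp add: powr_diff powr_add field_simps power2_eq_square)
  qed
  finally show ?thesis .
qed


lemma supA:
  fixes b c \<beta> :: real
  assumes c: "c > 0" and b: "b \<ge> 0" and be: "0 \<le> \<beta>" "\<beta> < 2"
  shows "\<exists>K1. \<forall>s\<ge>1. b * s powr \<beta> \<le> c/2 * s^2 + K1"
proof -
  define R where "R = max 1 ((2*b/c) powr (1/(2-\<beta>)))"
  have R1: "R \<ge> 1" by (simp add: R_def)
  have "b * s powr \<beta> \<le> c/2 * s^2 + b * R^2" if s: "s \<ge> 1" for s
  proof (cases "s \<ge> R")
    case True
    show ?thesis
    proof (cases "b = 0")
      case True then show ?thesis using c by simp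
    next
      case False
      then have bp: "b > 0" using b by simp
      have "R powr (2-\<beta>) \<ge> ((2*b/c) powr (1/(2-\<beta>))) powr (2-\<beta>)"
        by (intro powr_mono2) (use be in \<open>auto simp: R_def\<close>)
      also have "((2*b/c) powr (1/(2-\<beta>))) powr (2-\<beta>) = 2*b/c"
        using be bp c by (simp add: powr_powr)
      finally have "2*b/c \<le> R powr (2-\<beta>)" .
      also have "R powr (2-\<beta>) \<le> s powr (2-\<beta>)"
        by (intro powr_mono2) (use be True R1 in auto)
      finally have q: "2*b/c \<le> s powr (2-\<beta>)" .
      have sp: "s powr \<beta> * s powr (2-\<beta>) = s^2"
        using s by (simp add: powr_add[symmetric] powr_numeral)
      have "b * s powr \<beta> * (2*b/c) \<le> b * s powr \<beta> * s powr (2-\<beta>)"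
        using q bp s by (intro mult_left_mono) auto
      then have "b * s powr \<beta> * (2*b/c) \<le> b * s^2"
        using sp by (simp add: mult.assoc)
      then have "b * s powr \<beta> \<le> c/2 * s^2"
        using bp c by (simp add: field_simps)
      then show ?thesis using b by (simp add: add_increasing2)
    qed
  next
    case False
    have "b * s powr \<beta> \<le> b * R powr \<beta>"
      by (intro mult_left_mono powr_mono2) (use False s be b in auto)
    also have "R powr \<beta> \<le> R powr 2"
      by (intro powr_mono) (use R1 be in auto)
    then have "b * R powr \<beta> \<le> b * R^2"
      using R1 b by (intro mult_left_mono) (auto simp: powr_numeral)
    finally show ?thesis using c by (simp add: add_increasing)
  qed
  then show ?thesis by blast
qed

lemma supB:
  fixes c r :: real
  assumes c: "c > 0"
  shows "\<exists>B. \<forall>s\<ge>1. s powr r * exp (-(c * s^2)) \<le> B"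
proof -
  define n where "n = nat \<lceil>max r 0\<rceil>"
  have rn: "r \<le> real n" unfolding n_def by linarith
  have "s powr r * exp (-(c * s^2)) \<le> fact n / c^n" if s: "s \<ge> 1" for s
  proof -
    have "s powr r \<le> s powr (real n)" by (intro powr_mono) (use rn s in auto)
    also have "\<dots> = s^n" using s by (simp add: powr_realpow)
    finally have a: "s powr r \<le> s^n" .
    have "(c * s^2)^n / fact n \<le> (\<Sum>m<Suc n. (c * s^2)^m / fact m)"
      by (rule member_le_sum) (use c in auto)
    also have "\<dots> \<le> exp (c * s^2)" by (rule expsum_le) (use c in simp)
    finally have e: "(c * s^2)^n / fact n \<le> exp (c * s^2)" .
    have sn: "s^n \<ge> 1" using s by simp
    have "s powr r * exp (-(c * s^2)) \<le> s^n * exp (-(c * s^2))"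
      by (intro mult_right_mono a) auto
    also have "\<dots> = s^n / exp (c * s^2)" by (simp add: exp_minus field_simps)
    also have "\<dots> \<le> s^n / ((c * s^2)^n / fact n)"
      by (intro divide_left_mono e) (use c s in auto)
    also have "\<dots> = fact n / (c^n * s^n)"
      using c s by (simp add: power_mult_distrib field_simps power2_eq_square power_mult[symmetric] mult_2_right power_add)
    also have "\<dots> \<le> fact n / c^n"
      using c sn by (intro divide_left_mono) (auto simp: mult_le_cancel_left1)
    finally show ?thesis .
  qed
  then show ?thesis by blast
qed

lemma supC:
  fixes b c \<beta> r :: real
  assumes c: "c > 0" and b: "b \<ge> 0" and be: "0 \<le> \<beta>" "\<beta> < 2"
  shows "\<exists>B. \<forall>s\<ge>1. s powr r * exp (b * s powr \<beta> - c * s^2) \<le> B"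
proof -
  obtain K1 where K1: "\<And>s. s \<ge> 1 \<Longrightarrow> b * s powr \<beta> \<le> c/2 * s^2 + K1"
    using supA[OF c b be] by blast
  obtain B where B: "\<And>s. s \<ge> 1 \<Longrightarrow> s powr r * exp (-(c/2 * s^2)) \<le> B"
    using supB[of "c/2" r] c by auto
  have "s powr r * exp (b * s powr \<beta> - c * s^2) \<le> exp K1 * B" if s: "s \<ge> 1" for s
  proof -
    have "exp (b * s powr \<beta> - c * s^2) \<le> exp (K1 - c/2 * s^2)"
      using K1[OF s] by simp
    also have "\<dots> = exp K1 * exp (-(c/2 * s^2))" by (simp flip: exp_add)
    finally have "s powr r * exp (b * s powr \<beta> - c * s^2) \<le> s powr r * (exp K1 * exp (-(c/2 * s^2)))"
      by (intro mult_left_mono) auto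
    also have "\<dots> = exp K1 * (s powr r * exp (-(c/2 * s^2)))" by simp
    also have "\<dots> \<le> exp K1 * B" by (intro mult_left_mono B s) auto
    finally show ?thesis .
  qed
  then show ?thesis by blast
qed


lemma Phi_eq:
  assumes x: "x > 0" and y: "y > 0" and xi: "\<xi> > 0"
  shows "Phi y \<xi> x = 1/(4*y^2) + 1/(4*\<xi>^2) - x^2/(8*y^2*\<xi>^2) - ((y/\<xi> - \<xi>/y)^2/8)/x^2"
  unfolding Phi_def zz_def using x y xi
  by (simp add: field_simps power2_eq_square)

lemma key_term:
  fixes y b2 \<beta> e r :: real
  assumes y: "y > 0" and b2: "b2 \<ge> 0" and be: "0 \<le> \<beta>" "\<beta> < 2"
  shows "\<exists>K\<ge>0. \<forall>x \<xi>. 0 < x \<longrightarrow> x \<le> min 1 (y/8) \<longrightarrow> 0 < \<xi> \<longrightarrow>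
     ((\<xi> \<ge> 2*y + 2/y + 1 \<longrightarrow> x powr e * \<xi> powr r * exp (Phi y \<xi> x + b2 * (\<xi> powr (-\<beta>) + \<xi> powr \<beta>)) \<le> K / \<xi>^2) \<and>
      (\<xi> \<le> 1 / (2*y + 2/y + 1) \<longrightarrow> x powr e * \<xi> powr r * exp (Phi y \<xi> x + b2 * (\<xi> powr (-\<beta>) + \<xi> powr \<beta>)) \<le> K))"
proof -
  define d0 where "d0 = min 1 (y/8)"
  define M1 where "M1 = 2*y + 2/y + 1"
  define cL where "cL = 1 / (64 * y^2 * d0^2)"
  define c0 where "c0 = 1/(4*y^2) + 1/4 + b2"
  have d0: "d0 > 0" "d0 \<le> 1" "d0 \<le> y/8" using y by (auto simp: d0_def)
  have cL: "cL > 0" unfolding cL_def using y d0 by simp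
  have M1: "M1 \<ge> 2*y" "M1 \<ge> 1" "M1 \<ge> 2/y" using y by (auto simp: M1_def)
  obtain B1 where B1: "\<And>s. s \<ge> 1 \<Longrightarrow> s powr (-e) * exp (0 * s powr 0 - 1/16 * s^2) \<le> B1"
    using supC[of "1/16" 0 0 "-e"] by auto
  obtain B2 where B2: "\<And>s. s \<ge> 1 \<Longrightarrow> s powr (r+2) * exp (b2 * s powr \<beta> - cL * s^2) \<le> B2"
    using supC[OF cL b2 be, of "r+2"] by auto
  obtain B3 where B3: "\<And>s. s \<ge> 1 \<Longrightarrow> s powr (-r) * exp (b2 * s powr \<beta> - 3/4 * s^2) \<le> B3"
    using supC[of "3/4" b2 \<beta> "-r"] b2 be by auto
  have B1p: "B1 \<ge> 0" using B1[of 1] by (smt (verit) exp_gt_zero mult_nonneg_nonneg powr_ge_zero)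
  have B2p: "B2 \<ge> 0" using B2[of 1] by (smt (verit) exp_gt_zero mult_nonneg_nonneg powr_ge_zero)
  have B3p: "B3 \<ge> 0" using B3[of 1] by (smt (verit) exp_gt_zero mult_nonneg_nonneg powr_ge_zero)
  define K where "K = exp c0 * B1 * max B2 B3"
  have Kp: "K \<ge> 0" unfolding K_def using B1p B2p B3p by simp
  have xb: "x powr e * exp (- (1/(16*x^2))) \<le> B1" if x: "0 < x" "x \<le> d0" for x
  proof -
    have s: "1/x \<ge> 1" using x d0 by (simp add: field_simps)
    have "(1/x) powr (-e) = x powr e" using x by (simp add: powr_divide powr_minus_divide)
    moreover have "0 * (1/x) powr 0 - 1/16 * (1/x)^2 = - (1/(16*x^2))" by (simp add: field_simps)
    ultimately show ?thesis using B1[OF s] by simp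
  qed
  have main: "x powr e * \<xi> powr r * exp (Phi y \<xi> x + b2 * (\<xi> powr (-\<beta>) + \<xi> powr \<beta>)) \<le>
              exp c0 * (x powr e * exp (- (1/(16*x^2)))) * (\<xi> powr r * exp (b2 * \<xi> powr \<beta> - cL * \<xi>^2))"
    if x: "0 < x" "x \<le> d0" and xi: "\<xi> \<ge> M1" for x \<xi>
  proof -
    have xi1: "\<xi> \<ge> 1" "\<xi> \<ge> 2*y" "\<xi> > 0" using xi M1 by auto
    define D where "D = (y/\<xi> - \<xi>/y)^2/8"
    have PhiE: "Phi y \<xi> x \<le> 1/(4*y^2) + 1/(4*\<xi>^2) - D/x^2"
      using Phi_eq[OF x(1) y xi1(3)] unfolding D_def
      using zero_le_divide_iff[of "x^2" "8*y^2*\<xi>^2"] by force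
    have w: "\<xi>/y - y/\<xi> \<ge> \<xi>/(2*y)"
    proof -
      have "(2*y)*(2*y) \<le> \<xi>*\<xi>" using xi1 y by (intro mult_mono) auto
      moreover have "y*(2*y) \<le> (2*y)*(2*y)" using y by (intro mult_right_mono) auto
      ultimately have "y*(2*y) \<le> \<xi>*\<xi>" by linarith
      then have "y/\<xi> \<le> \<xi>/(2*y)" using xi1 y by (simp add: field_simps)
      then show ?thesis by (simp add: field_simps)
    qed
    have w1: "\<xi>/(2*y) \<ge> 1" using xi1 y by (simp add: field_simps)
    have Dl: "D \<ge> \<xi>^2/(32*y^2)"
    proof -
      have "(\<xi>/(2*y))^2 \<le> (\<xi>/y - y/\<xi>)^2"
        using w w1 by (intro power_mono) auto
      then have "(\<xi>/(2*y))^2 \<le> (y/\<xi> - \<xi>/y)^2" by (simp add: power2_commute)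
      then show ?thesis unfolding D_def by (simp add: power_divide field_simps)
    qed
    have D8: "D \<ge> 1/8"
    proof -
      have "1 \<le> (\<xi>/(2*y))^2" using w1 by (simp add: one_le_power)
      then have "1 \<le> (\<xi>/y - y/\<xi>)^2" using w w1 power_mono[of "\<xi>/(2*y)" "\<xi>/y - y/\<xi>" 2] by linarith
      then show ?thesis unfolding D_def by (simp add: power2_commute)
    qed
    have "D/x^2 = D/(2*x^2) + D/(2*x^2)" by simp
    moreover have "D/(2*x^2) \<ge> (1/8)/(2*x^2)" using D8 x by (intro divide_right_mono) auto
    moreover have "D/(2*x^2) \<ge> cL * \<xi>^2"
    proof -
      have "D/(2*x^2) \<ge> D/(2*d0^2)"
        using x D8 by (intro divide_left_mono mult_left_mono power_mono) auto
      moreover have "D/(2*d0^2) \<ge> (\<xi>^2/(32*y^2))/(2*d0^2)"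
        using Dl d0 by (intro divide_right_mono) auto
      moreover have "(\<xi>^2/(32*y^2))/(2*d0^2) = cL * \<xi>^2" unfolding cL_def by simp
      ultimately show ?thesis by linarith
    qed
    ultimately have Dx: "D/x^2 \<ge> 1/(16*x^2) + cL * \<xi>^2" by (simp add: field_simps)
    have a1: "1/(4*\<xi>^2) \<le> 1/4" using xi1 by (simp add: field_simps one_le_power)
    have a2: "\<xi> powr (-\<beta>) \<le> 1" using ge_one_powr_ge_zero[of \<xi> \<beta>] xi1 be by (simp add: powr_minus_divide)
    have "Phi y \<xi> x + b2 * (\<xi> powr (-\<beta>) + \<xi> powr \<beta>) \<le> c0 + (- (1/(16*x^2))) + (b2 * \<xi> powr \<beta> - cL * \<xi>^2)"
    proof -
      have "b2 * \<xi> powr (-\<beta>) \<le> b2" using a2 b2 by (simp add: mult_left_le)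
      then show ?thesis using PhiE Dx a1 unfolding c0_def by (simp add: algebra_simps)
    qed
    then have "exp (Phi y \<xi> x + b2 * (\<xi> powr (-\<beta>) + \<xi> powr \<beta>)) \<le> exp c0 * exp (- (1/(16*x^2))) * exp (b2 * \<xi> powr \<beta> - cL * \<xi>^2)"
      by (simp flip: exp_add)
    then show ?thesis
      by (rule ord_le_eq_trans[OF mult_left_mono]) (auto simp: algebra_simps)
  qed
  have mainS: "x powr e * \<xi> powr r * exp (Phi y \<xi> x + b2 * (\<xi> powr (-\<beta>) + \<xi> powr \<beta>)) \<le>
              exp c0 * (x powr e * exp (- (1/(16*x^2)))) * (\<xi> powr r * exp (b2 * (1/\<xi>) powr \<beta> - 3/4 * (1/\<xi>)^2))"
    if x: "0 < x" "x \<le> d0" and xi: "\<xi> \<le> 1/M1" "\<xi> > 0" for x \<xi>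
  proof -
    have xiy: "\<xi> \<le> y/2" "\<xi> \<le> 1"
    proof -
      have "1/M1 \<le> 1/(2/y)" using M1 y by (intro divide_left_mono) auto
      then show "\<xi> \<le> y/2" using xi by simp
      have "1/M1 \<le> 1" using M1 by simp
      then show "\<xi> \<le> 1" using xi by simp
    qed
    define D where "D = (y/\<xi> - \<xi>/y)^2/8"
    have PhiE: "Phi y \<xi> x \<le> 1/(4*y^2) + 1/(4*\<xi>^2) - D/x^2"
      using Phi_eq[OF x(1) y xi(2)] unfolding D_def
      using zero_le_divide_iff[of "x^2" "8*y^2*\<xi>^2"] by force
    have w: "y/\<xi> - \<xi>/y \<ge> y/(2*\<xi>)"
    proof -
      have "\<xi>*\<xi> \<le> (y/2)*(y/2)" using xiy xi by (intro mult_mono) auto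
      moreover have "(2*\<xi>)*(2*\<xi>) \<le> y*y" using calculation by (simp add: algebra_simps)
      moreover have "\<xi>*(2*\<xi>) \<le> (2*\<xi>)*(2*\<xi>)" using xi by (intro mult_right_mono) auto
      ultimately have "\<xi>*(2*\<xi>) \<le> y*y" by linarith
      then have "\<xi>/y \<le> y/(2*\<xi>)" using xi y by (simp add: field_simps)
      then show ?thesis by (simp add: field_simps)
    qed
    have w1: "y/(2*\<xi>) \<ge> 1" using xiy xi by (simp add: field_simps)
    have Dl: "D \<ge> y^2/(32*\<xi>^2)"
    proof -
      have "(y/(2*\<xi>))^2 \<le> (y/\<xi> - \<xi>/y)^2"
        using w w1 by (intro power_mono) auto
      then show ?thesis unfolding D_def by (simp add: power_divide field_simps)
    qed
    have D8: "D \<ge> 1/8"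
    proof -
      have "1 \<le> (y/(2*\<xi>))^2" using w1 by (simp add: one_le_power)
      then have "1 \<le> (y/\<xi> - \<xi>/y)^2" using w w1 power_mono[of "y/(2*\<xi>)" "y/\<xi> - \<xi>/y" 2] by linarith
      then show ?thesis unfolding D_def by simp
    qed
    have "D/x^2 = D/(2*x^2) + D/(2*x^2)" by simp
    moreover have "D/(2*x^2) \<ge> (1/8)/(2*x^2)" using D8 x by (intro divide_right_mono) auto
    moreover have "D/(2*x^2) \<ge> 1/\<xi>^2"
    proof -
      have "D/(2*x^2) \<ge> D/(2*d0^2)"
        using x D8 by (intro divide_left_mono mult_left_mono power_mono) auto
      moreover have "D/(2*d0^2) \<ge> (y^2/(32*\<xi>^2))/(2*d0^2)"
        using Dl d0 by (intro divide_right_mono) auto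
      moreover have "(y^2/(32*\<xi>^2))/(2*d0^2) \<ge> 1/\<xi>^2"
      proof -
        have "64 * d0^2 \<le> y^2"
        proof -
          have "d0^2 \<le> (y/8)^2" using d0 by (intro power_mono) auto
          then show ?thesis by (simp add: power_divide)
        qed
        then show ?thesis using xi d0 by (simp add: field_simps)
      qed
      ultimately show ?thesis by linarith
    qed
    ultimately have Dx: "D/x^2 \<ge> 1/(16*x^2) + 1/\<xi>^2" by (simp add: field_simps)
    have a2: "\<xi> powr \<beta> \<le> 1" using powr_le1[of \<beta> \<xi>] xiy xi be by simp
    have a3: "\<xi> powr (-\<beta>) = (1/\<xi>) powr \<beta>" using xi by (simp add: powr_divide powr_minus_divide)
    have a4: "1/(4*\<xi>^2) - 1/\<xi>^2 = - (3/4 * (1/\<xi>)^2)" by (simp add: field_simps)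
    have "Phi y \<xi> x + b2 * (\<xi> powr (-\<beta>) + \<xi> powr \<beta>) \<le> c0 + (- (1/(16*x^2))) + (b2 * (1/\<xi>) powr \<beta> - 3/4 * (1/\<xi>)^2)"
    proof -
      have "b2 * \<xi> powr \<beta> \<le> b2" using a2 b2 by (simp add: mult_left_le)
      then show ?thesis using PhiE Dx a4 unfolding c0_def a3 by (simp add: algebra_simps)
    qed
    then have "exp (Phi y \<xi> x + b2 * (\<xi> powr (-\<beta>) + \<xi> powr \<beta>)) \<le> exp c0 * exp (- (1/(16*x^2))) * exp (b2 * (1/\<xi>) powr \<beta> - 3/4 * (1/\<xi>)^2)"
      by (simp flip: exp_add)
    then show ?thesis
      by (rule ord_le_eq_trans[OF mult_left_mono]) (auto simp: algebra_simps)
  qed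
  have "\<forall>x \<xi>. 0 < x \<longrightarrow> x \<le> d0 \<longrightarrow> 0 < \<xi> \<longrightarrow>
     ((\<xi> \<ge> M1 \<longrightarrow> x powr e * \<xi> powr r * exp (Phi y \<xi> x + b2 * (\<xi> powr (-\<beta>) + \<xi> powr \<beta>)) \<le> K / \<xi>^2) \<and>
      (\<xi> \<le> 1 / M1 \<longrightarrow> x powr e * \<xi> powr r * exp (Phi y \<xi> x + b2 * (\<xi> powr (-\<beta>) + \<xi> powr \<beta>)) \<le> K))"
  proof (intro allI impI conjI)
    fix x \<xi> :: real assume x: "0 < x" "x \<le> d0" and xi: "0 < \<xi>"
    have X: "0 \<le> x powr e * exp (- (1/(16*x^2)))" "x powr e * exp (- (1/(16*x^2))) \<le> B1" using xb[OF x] by auto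
    {
      assume l: "\<xi> \<ge> M1"
      have xi1: "\<xi> \<ge> 1" using l M1 by auto
      have "\<xi> powr r * exp (b2 * \<xi> powr \<beta> - cL * \<xi>^2) \<le> B2 / \<xi>^2"
      proof -
        have "\<xi> powr (r+2) = \<xi> powr r * \<xi>^2" using xi by (simp add: powr_add powr_numeral)
        then show ?thesis using B2[OF xi1] xi by (simp add: field_simps)
      qed
      also have "\<dots> \<le> max B2 B3 / \<xi>^2" by (intro divide_right_mono) auto
      finally have Y: "\<xi> powr r * exp (b2 * \<xi> powr \<beta> - cL * \<xi>^2) \<le> max B2 B3 / \<xi>^2" .
      have "x powr e * \<xi> powr r * exp (Phi y \<xi> x + b2 * (\<xi> powr (-\<beta>) + \<xi> powr \<beta>)) \<le>
              exp c0 * (x powr e * exp (- (1/(16*x^2)))) * (\<xi> powr r * exp (b2 * \<xi> powr \<beta> - cL * \<xi>^2))"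
        by (rule main[OF x l])
      also have "\<dots> \<le> exp c0 * B1 * (max B2 B3 / \<xi>^2)"
        by (intro mult_mono mult_left_mono X Y) (use B1p in auto)
      finally show "x powr e * \<xi> powr r * exp (Phi y \<xi> x + b2 * (\<xi> powr (-\<beta>) + \<xi> powr \<beta>)) \<le> K / \<xi>^2"
        by (simp add: K_def)
    }
    {
      assume s: "\<xi> \<le> 1/M1"
      have s1: "1/\<xi> \<ge> 1"
      proof -
        have "1/M1 \<le> 1" using M1 by simp
        then show ?thesis using s xi by (simp add: field_simps)
      qed
      have "\<xi> powr r * exp (b2 * (1/\<xi>) powr \<beta> - 3/4 * (1/\<xi>)^2) \<le> B3"
      proof -
        have "(1/\<xi>) powr (-r) = \<xi> powr r" using xi by (simp add: powr_divide powr_minus_divide)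
        then show ?thesis using B3[OF s1] by simp
      qed
      also have "\<dots> \<le> max B2 B3" by simp
      finally have Y: "\<xi> powr r * exp (b2 * (1/\<xi>) powr \<beta> - 3/4 * (1/\<xi>)^2) \<le> max B2 B3" .
      have "x powr e * \<xi> powr r * exp (Phi y \<xi> x + b2 * (\<xi> powr (-\<beta>) + \<xi> powr \<beta>)) \<le>
              exp c0 * (x powr e * exp (- (1/(16*x^2)))) * (\<xi> powr r * exp (b2 * (1/\<xi>) powr \<beta> - 3/4 * (1/\<xi>)^2))"
        by (rule mainS[OF x s xi])
      also have "\<dots> \<le> exp c0 * B1 * max B2 B3"
        by (intro mult_mono mult_left_mono X Y) (use B1p in auto)
      finally show "x powr e * \<xi> powr r * exp (Phi y \<xi> x + b2 * (\<xi> powr (-\<beta>) + \<xi> powr \<beta>)) \<le> K"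
        by (simp add: K_def)
    }
  qed
  then show ?thesis using Kp unfolding d0_def M1_def by blast
qed


lemma key_list:
  fixes y b2 \<beta> \<rho> \<nu> :: real
  assumes y: "y > 0" and b2: "b2 \<ge> 0" and be: "0 \<le> \<beta>" "\<beta> < 2" and nu: "\<nu> < 1"
  shows "\<exists>K\<ge>0. \<forall>x \<xi>. 0 < x \<longrightarrow> x \<le> min 1 (y/8) \<longrightarrow> 0 < \<xi> \<longrightarrow>
     ((\<xi> \<ge> 2*y + 2/y + 1 \<longrightarrow> tb \<nu> y \<xi> L x * (\<xi> powr \<rho> * exp (b2 * (\<xi> powr (-\<beta>) + \<xi> powr \<beta>))) \<le> K / \<xi>^2) \<and>
      (\<xi> \<le> 1 / (2*y + 2/y + 1) \<longrightarrow> tb \<nu> y \<xi> L x * (\<xi> powr \<rho> * exp (b2 * (\<xi> powr (-\<beta>) + \<xi> powr \<beta>))) \<le> K))"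
proof (induction L)
  case Nil
  show ?case by (intro exI[of _ 0]) (simp add: tb_def)
next
  case (Cons t L)
  obtain c e j k where t: "t = (c,e,j,k)" by (cases t) auto
  obtain KL where KL: "KL \<ge> 0" "\<forall>x \<xi>. 0 < x \<longrightarrow> x \<le> min 1 (y/8) \<longrightarrow> 0 < \<xi> \<longrightarrow>
     ((\<xi> \<ge> 2*y + 2/y + 1 \<longrightarrow> tb \<nu> y \<xi> L x * (\<xi> powr \<rho> * exp (b2 * (\<xi> powr (-\<beta>) + \<xi> powr \<beta>))) \<le> KL / \<xi>^2) \<and>
      (\<xi> \<le> 1 / (2*y + 2/y + 1) \<longrightarrow> tb \<nu> y \<xi> L x * (\<xi> powr \<rho> * exp (b2 * (\<xi> powr (-\<beta>) + \<xi> powr \<beta>))) \<le> KL))"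
    using Cons.IH by blast
  obtain Kt where Kt: "Kt \<ge> 0" "\<forall>x \<xi>. 0 < x \<longrightarrow> x \<le> min 1 (y/8) \<longrightarrow> 0 < \<xi> \<longrightarrow>
     ((\<xi> \<ge> 2*y + 2/y + 1 \<longrightarrow> x powr e * \<xi> powr (j + \<rho>) * exp (Phi y \<xi> x + b2 * (\<xi> powr (-\<beta>) + \<xi> powr \<beta>)) \<le> Kt / \<xi>^2) \<and>
      (\<xi> \<le> 1 / (2*y + 2/y + 1) \<longrightarrow> x powr e * \<xi> powr (j + \<rho>) * exp (Phi y \<xi> x + b2 * (\<xi> powr (-\<beta>) + \<xi> powr \<beta>)) \<le> Kt))"
    using key_term[OF y b2 be, of e "j + \<rho>"] by blast
  define a where "a = \<bar>c\<bar> * Kf \<nu> k 0"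
  have a: "a \<ge> 0" unfolding a_def using K_nonneg[OF nu] by simp
  have split: "tb \<nu> y \<xi> (t # L) x * (\<xi> powr \<rho> * exp (b2 * (\<xi> powr (-\<beta>) + \<xi> powr \<beta>))) =
      a * (x powr e * \<xi> powr (j + \<rho>) * exp (Phi y \<xi> x + b2 * (\<xi> powr (-\<beta>) + \<xi> powr \<beta>)))
      + tb \<nu> y \<xi> L x * (\<xi> powr \<rho> * exp (b2 * (\<xi> powr (-\<beta>) + \<xi> powr \<beta>)))" for x \<xi>
    by (simp add: tb_def t a_def powr_add exp_add algebra_simps)
  show ?case
  proof (intro exI[of _ "a * Kt + KL"] conjI allI impI)
    show "0 \<le> a * Kt + KL" using a Kt KL by simp
  next
    fix x \<xi> :: real assume x: "0 < x" "x \<le> min 1 (y/8)" and xi: "0 < \<xi>"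
    {
      assume l: "2*y + 2/y + 1 \<le> \<xi>"
      have "a * (x powr e * \<xi> powr (j + \<rho>) * exp (Phi y \<xi> x + b2 * (\<xi> powr (-\<beta>) + \<xi> powr \<beta>))) \<le> a * (Kt / \<xi>^2)"
        using Kt(2) x xi l a by (intro mult_left_mono) auto
      moreover have "tb \<nu> y \<xi> L x * (\<xi> powr \<rho> * exp (b2 * (\<xi> powr (-\<beta>) + \<xi> powr \<beta>))) \<le> KL / \<xi>^2"
        using KL(2) x xi l by auto
      ultimately show "tb \<nu> y \<xi> (t # L) x * (\<xi> powr \<rho> * exp (b2 * (\<xi> powr (-\<beta>) + \<xi> powr \<beta>))) \<le> (a * Kt + KL) / \<xi>^2"
        unfolding split by (simp add: add_divide_distrib)
    }
    {
      assume l: "\<xi> \<le> 1 / (2*y + 2/y + 1)"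
      have "a * (x powr e * \<xi> powr (j + \<rho>) * exp (Phi y \<xi> x + b2 * (\<xi> powr (-\<beta>) + \<xi> powr \<beta>))) \<le> a * Kt"
        using Kt(2) x xi l a by (intro mult_left_mono) auto
      moreover have "tb \<nu> y \<xi> L x * (\<xi> powr \<rho> * exp (b2 * (\<xi> powr (-\<beta>) + \<xi> powr \<beta>))) \<le> KL"
        using KL(2) x xi l by auto
      ultimately show "tb \<nu> y \<xi> (t # L) x * (\<xi> powr \<rho> * exp (b2 * (\<xi> powr (-\<beta>) + \<xi> powr \<beta>))) \<le> a * Kt + KL"
        unfolding split by simp
    }
  qed
qed

lemma tail_int:
  assumes M: "M > 0" and K: "K \<ge> 0"
  shows "(\<integral>\<^sup>+ \<xi>. ennreal (K / \<xi>^2) * indicator {M..} \<xi> \<partial>lborel) = ennreal (K / M)"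
proof -
  have "(\<integral>\<^sup>+ \<xi>. ennreal (K / \<xi>^2) * indicator {M..} \<xi> \<partial>lborel) = ennreal (0 - (- K / M))"
  proof (rule nn_integral_FTC_atLeast)
    show "(\<lambda>\<xi>. K / \<xi>^2) \<in> borel_measurable borel" by measurable
    fix x :: real assume "M \<le> x"
    then have x: "x > 0" using M by simp
    show "((\<lambda>\<xi>. - K / \<xi>) has_real_derivative K / x^2) (at x)"
      using x by (auto intro!: derivative_eq_intros simp: power2_eq_square)
    show "0 \<le> K / x^2" using K by simp
  next
    show "((\<lambda>\<xi>::real. - K / \<xi>) \<longlongrightarrow> 0) at_top"
      by (rule tendsto_divide_0[OF tendsto_const]) (rule filterlim_mono[OF filterlim_ident at_top_le_at_infinity order_refl])
  qed
  then show ?thesis by simp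
qed

lemma head_int:
  assumes M: "M > 0" and K: "K \<ge> 0"
  shows "(\<integral>\<^sup>+ \<xi>. ennreal (K * indicator {0<..1/M} \<xi>) \<partial>lborel) = ennreal (K / M)"
proof -
  have "(\<integral>\<^sup>+ \<xi>. ennreal (K * indicator {0<..1/M} \<xi>) \<partial>lborel) = (\<integral>\<^sup>+ \<xi>. ennreal K * indicator {0<..1/M} \<xi> \<partial>lborel)"
    by (intro nn_integral_cong) (auto simp: indicator_def)
  also have "\<dots> = ennreal K * emeasure lborel {0<..1/M}"
    by (rule nn_integral_cmult_indicator) simp
  also have "\<dots> = ennreal K * ennreal (1/M)" using M by simp
  also have "\<dots> = ennreal (K / M)" using K M by (simp add: ennreal_mult[symmetric])
  finally show ?thesis .
qed

theorem mainTheorem7: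
  fixes \<alpha> y :: real and f :: "real \<Rightarrow> real" and p :: nat
  assumes "\<alpha> < 1/2" and "y > 0" and "f \<in> classE"
  shows "\<forall>\<epsilon>>0. \<exists>\<delta>>0. \<exists>M0>0. \<forall>x\<in>{0<..\<delta>}. \<forall>M\<ge>M0.
           (\<integral>\<^sup>+ \<xi>\<in>EM M. ennreal (\<bar>f \<xi>\<bar> * \<bar>(deriv ^^ p) (\<lambda>t. qq \<alpha> t y \<xi>) x\<bar> * mm \<alpha> \<xi>) \<partial>lebesgue)
             < ennreal \<epsilon>"
proof (intro allI impI)
  fix \<epsilon> :: real assume eps: "\<epsilon> > 0"
  note al = assms(1) and y = assms(2)
  obtain b1 b2 \<beta> where b1: "b1 \<ge> 0" and b2: "b2 \<ge> 0" and be: "0 \<le> \<beta>" "\<beta> < 2"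
    and fb: "\<And>x. x > 0 \<Longrightarrow> \<bar>f x\<bar> \<le> b1 * exp (1 / (2 * x^2) + b2 * (x powr (-\<beta>) + x powr \<beta>))"
    using assms(3) unfolding classE_def by blast
  define \<nu> where "\<nu> = 2*\<alpha>"
  have nu: "\<nu> < 1" using al by (simp add: \<nu>_def)
  define L where "L = (dl y ^^ p) (L0 \<alpha> y)"
  define d0 where "d0 = min 1 (y/8)"
  define M1 where "M1 = 2*y + 2/y + 1"
  have d0: "d0 > 0" using y by (simp add: d0_def)
  have M1: "M1 > 1"
  proof -
    have "2/y > 0" using y by simp
    then show ?thesis using y unfolding M1_def by linarith
  qed
  obtain K where K: "K \<ge> 0" and KB: "\<forall>x \<xi>. 0 < x \<longrightarrow> x \<le> d0 \<longrightarrow> 0 < \<xi> \<longrightarrow>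
     ((\<xi> \<ge> M1 \<longrightarrow> tb \<nu> y \<xi> L x * (\<xi> powr (1 - 4*\<alpha>) * exp (b2 * (\<xi> powr (-\<beta>) + \<xi> powr \<beta>))) \<le> K / \<xi>^2) \<and>
      (\<xi> \<le> 1 / M1 \<longrightarrow> tb \<nu> y \<xi> L x * (\<xi> powr (1 - 4*\<alpha>) * exp (b2 * (\<xi> powr (-\<beta>) + \<xi> powr \<beta>))) \<le> K))"
    using key_list[OF y b2 be nu, of L "1 - 4*\<alpha>"] unfolding d0_def M1_def by blast
  define K' where "K' = b1 * K"
  have K': "K' \<ge> 0" using b1 K by (simp add: K'_def)
  define I where "I x \<xi> = \<bar>f \<xi>\<bar> * \<bar>(deriv ^^ p) (\<lambda>t. qq \<alpha> t y \<xi>) x\<bar> * mm \<alpha> \<xi>" for x \<xi>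
  have pw: "I x \<xi> \<le> b1 * (tb \<nu> y \<xi> L x * (\<xi> powr (1 - 4*\<alpha>) * exp (b2 * (\<xi> powr (-\<beta>) + \<xi> powr \<beta>))))"
    if x: "0 < x" and xi: "0 < \<xi>" for x \<xi>
  proof -
    have D: "(deriv ^^ p) (\<lambda>t. qq \<alpha> t y \<xi>) x = tls \<nu> y \<xi> L x"
      unfolding L_def
      by (rule deriv_rep[OF y xi nu _ x]) (simp add: qq_rep[OF al _ y xi] \<nu>_def)
    have Db: "\<bar>(deriv ^^ p) (\<lambda>t. qq \<alpha> t y \<xi>) x\<bar> \<le> tb \<nu> y \<xi> L x"
      unfolding D by (rule tl_bound[OF x y xi nu])
    have mmv: "mm \<alpha> \<xi> = \<xi> powr (1 - 4*\<alpha>) * exp (- 1 / (2 * \<xi>^2))" by (simp add: mm_def)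
    have mp: "mm \<alpha> \<xi> \<ge> 0" by (simp add: mmv)
    have "I x \<xi> \<le> (b1 * exp (1 / (2 * \<xi>^2) + b2 * (\<xi> powr (-\<beta>) + \<xi> powr \<beta>))) * tb \<nu> y \<xi> L x * mm \<alpha> \<xi>"
      unfolding I_def by (intro mult_right_mono mult_mono fb xi Db mp) (use b1 in auto)
    also have "\<dots> = b1 * (tb \<nu> y \<xi> L x * (\<xi> powr (1 - 4*\<alpha>) * exp (b2 * (\<xi> powr (-\<beta>) + \<xi> powr \<beta>))))"
    proof -
      have "exp (1 / (2 * \<xi>^2) + b2 * (\<xi> powr (-\<beta>) + \<xi> powr \<beta>)) * exp (- 1 / (2 * \<xi>^2)) = exp (b2 * (\<xi> powr (-\<beta>) + \<xi> powr \<beta>))"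
        by (simp flip: exp_add)
      then show ?thesis unfolding mmv by (simp add: algebra_simps)
    qed
    finally show ?thesis .
  qed
  define M0 where "M0 = max M1 (4 * K' / \<epsilon> + 1)"
  have M0p: "M0 > 0" using M1 by (simp add: M0_def)
  have main: "\<forall>x\<in>{0<..d0}. \<forall>M\<ge>M0.
           (\<integral>\<^sup>+ \<xi>\<in>EM M. ennreal (\<bar>f \<xi>\<bar> * \<bar>(deriv ^^ p) (\<lambda>t. qq \<alpha> t y \<xi>) x\<bar> * mm \<alpha> \<xi>) \<partial>lebesgue)
             < ennreal \<epsilon>"
  proof (intro ballI allI impI)
    fix x M :: real assume x: "x \<in> {0<..d0}" and M: "M0 \<le> M"
    have x0: "0 < x" "x \<le> d0" using x by auto
    have MM1: "M \<ge> M1" using M by (simp add: M0_def)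
    have Mp: "M > 0" using MM1 M1 by simp
    have Mbig: "M > 4 * K' / \<epsilon>" using M by (simp add: M0_def)
    have le: "ennreal (I x \<xi>) * indicator (EM M) \<xi> \<le> ennreal (K' * indicator {0<..1/M} \<xi>) + ennreal (K' / \<xi>^2) * indicator {M..} \<xi>" for \<xi>
    proof (cases "\<xi> \<in> EM M")
      case False then show ?thesis by simp
    next
      case True
      note inEM = True
      then have xi: "\<xi> > 0" using Mp by (auto simp: EM_def)
      show ?thesis
      proof (cases "\<xi> \<le> 1/M")
        case True
        have "1/M \<le> 1/M1" using MM1 M1 by (intro divide_left_mono) auto
        then have "\<xi> \<le> 1/M1" using True by linarith
        then have "I x \<xi> \<le> K'" using pw[OF x0(1) xi] KB x0 xi b1 unfolding K'_def
          by (meson mult_left_mono order_trans)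
        moreover have "\<xi> \<in> {0<..1/M}" using True xi by simp
        ultimately show ?thesis using inEM by (simp add: ennreal_leI add_increasing2)
      next
        case False
        then have "\<xi> \<ge> M" using True by (auto simp: EM_def)
        then have "\<xi> \<ge> M1" using MM1 by simp
        then have "I x \<xi> \<le> K' / \<xi>^2" using pw[OF x0(1) xi] KB x0 xi b1 unfolding K'_def
          by (smt (verit) mult_left_mono times_divide_eq_right)
        moreover have "\<xi> \<notin> {0<..1/M}" using False by simp
        ultimately show ?thesis using \<open>\<xi> \<ge> M\<close> inEM by (simp add: ennreal_leI)
      qed
    qed
    have "(\<integral>\<^sup>+ \<xi>\<in>EM M. ennreal (I x \<xi>) \<partial>lebesgue) = (\<integral>\<^sup>+ \<xi>. ennreal (I x \<xi>) * indicator (EM M) \<xi> \<partial>lborel)"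
      by (simp add: nn_integral_completion)
    also have "\<dots> \<le> (\<integral>\<^sup>+ \<xi>. ennreal (K' * indicator {0<..1/M} \<xi>) + ennreal (K' / \<xi>^2) * indicator {M..} \<xi> \<partial>lborel)"
      by (intro nn_integral_mono le)
    also have "\<dots> = (\<integral>\<^sup>+ \<xi>. ennreal (K' * indicator {0<..1/M} \<xi>) \<partial>lborel) + (\<integral>\<^sup>+ \<xi>. ennreal (K' / \<xi>^2) * indicator {M..} \<xi> \<partial>lborel)"
      by (rule nn_integral_add) measurable
    also have "\<dots> = ennreal (K'/M) + ennreal (K'/M)"
      using head_int[OF Mp K'] tail_int[OF Mp K'] by simp
    also have "\<dots> = ennreal (2 * K' / M)" using K' Mp by (simp flip: ennreal_plus)
    also have "\<dots> < ennreal \<epsilon>"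
    proof -
      have "2 * K' / M < \<epsilon>"
      proof (cases "K' = 0")
        case True then show ?thesis using eps by simp
      next
        case False
        then have "K' > 0" using K' by simp
        have "4 * K' / \<epsilon> * \<epsilon> < M * \<epsilon>" using Mbig eps by (intro mult_strict_right_mono) auto
        then have "4 * K' < M * \<epsilon>" using eps by simp
        then have "2 * K' < M * \<epsilon>" using \<open>K' > 0\<close> by linarith
        then show ?thesis using Mp by (simp add: divide_less_eq mult.commute)
      qed
      then show ?thesis using eps by (intro ennreal_lessI)
    qed
    finally show "(\<integral>\<^sup>+ \<xi>\<in>EM M. ennreal (\<bar>f \<xi>\<bar> * \<bar>(deriv ^^ p) (\<lambda>t. qq \<alpha> t y \<xi>) x\<bar> * mm \<alpha> \<xi>) \<partial>lebesgue) < ennreal \<epsilon>"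
      unfolding I_def .
  qed
  show "\<exists>\<delta>>0. \<exists>M0>0. \<forall>x\<in>{0<..\<delta>}. \<forall>M\<ge>M0.
           (\<integral>\<^sup>+ \<xi>\<in>EM M. ennreal (\<bar>f \<xi>\<bar> * \<bar>(deriv ^^ p) (\<lambda>t. qq \<alpha> t y \<xi>) x\<bar> * mm \<alpha> \<xi>) \<partial>lebesgue)
             < ennreal \<epsilon>"
    using d0 M0p main by blast
qed


end
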